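(* Let $F$ be a forest with at least one vertex. Then $F$ is a tree (i.e. connected) if and only if its chromatic symmetric function $X_F$ is irreducible in the ring $\Lambda$ of symmetric functions (over $\mathbb{C}$).
   Context: For a graph $G=(V,E)$ with $V=\{v_1,\dots,v_n\}$, a proper coloring is a map $\kappa:V\to\mathbb{N}$ with $\kappa(u)\ne\kappa(v)$ whenever $(u,v)\in E$. The chromatic symmetric function is $X_G=\sum_\kappa x_{\kappa(v_1)}\cdots x_{\kappa(v_n)}$, summed over proper colorings. $\Lambda$ is the ring of symmetric functions, which is the polynomial ring $\mathbb{C}[p_1,p_2,\dots]$ in the power sums $p_m=\sum_i x_i^m$. Irreducible means non-constant, non-unit, and not a product of two non-constant elements. *)

theory Defs
  imports Complex_Main "HOL-Library.FuncSet"
begin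

definition simple_graph :: "'a set \<Rightarrow> ('a \<Rightarrow> 'a \<Rightarrow> bool) \<Rightarrow> bool" where
  "simple_graph V E \<longleftrightarrow> finite V \<and> (\<forall>u v. E u v \<longrightarrow> u \<in> V \<and> v \<in> V)
     \<and> (\<forall>u v. E u v \<longrightarrow> E v u) \<and> (\<forall>v. \<not> E v v)"

definition is_cycle :: "'a set \<Rightarrow> ('a \<Rightarrow> 'a \<Rightarrow> bool) \<Rightarrow> 'a list \<Rightarrow> bool" where
  "is_cycle V E cs \<longleftrightarrow> length cs \<ge> 3 \<and> distinct cs \<and> set cs \<subseteq> V
     \<and> (\<forall>i. Suc i < length cs \<longrightarrow> E (cs ! i) (cs ! Suc i))
     \<and> E (last cs) (hd cs)"

definition forest :: "'a set \<Rightarrow> ('a \<Rightarrow> 'a \<Rightarrow> bool) \<Rightarrow> bool" where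
  "forest V E \<longleftrightarrow> simple_graph V E \<and> (\<nexists>cs. is_cycle V E cs)"

definition connected_graph :: "'a set \<Rightarrow> ('a \<Rightarrow> 'a \<Rightarrow> bool) \<Rightarrow> bool" where
  "connected_graph V E \<longleftrightarrow> (\<forall>u\<in>V. \<forall>v\<in>V. E\<^sup>*\<^sup>* u v)"

definition tree :: "'a set \<Rightarrow> ('a \<Rightarrow> 'a \<Rightarrow> bool) \<Rightarrow> bool" where
  "tree V E \<longleftrightarrow> forest V E \<and> connected_graph V E"

text \<open>A monomial is an exponent vector \<open>m :: nat \<Rightarrow> nat\<close> (finitely supported);
  a formal series is its coefficient function \<open>monomial \<Rightarrow> complex\<close>.\<close>
type_synonym monom = "nat \<Rightarrow> nat"
type_synonym series = "monom \<Rightarrow> complex"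

definition fin_supp :: "monom \<Rightarrow> bool" where
  "fin_supp m \<longleftrightarrow> finite {i. m i \<noteq> 0}"

definition mdeg :: "monom \<Rightarrow> nat" where
  "mdeg m = (\<Sum>i\<in>{i. m i \<noteq> 0}. m i)"

definition series_mult :: "series \<Rightarrow> series \<Rightarrow> series" where
  "series_mult f g = (\<lambda>m. \<Sum>a\<in>{a. \<forall>i. a i \<le> m i}. f a * g (\<lambda>i. m i - a i))"

definition series_one :: series where
  "series_one = (\<lambda>m. if m = (\<lambda>_. 0) then 1 else 0)"

definition series_const :: "series \<Rightarrow> bool" where
  "series_const f \<longleftrightarrow> (\<forall>m. m \<noteq> (\<lambda>_. 0) \<longrightarrow> f m = 0)"

text \<open>The ring \<open>\<Lambda>\<close> of symmetric functions over \<open>\<complex>\<close>: symmetric formal series of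
  bounded degree supported on (finitely supported) monomials.\<close>
definition sym_fun :: "series \<Rightarrow> bool" where
  "sym_fun f \<longleftrightarrow> (\<forall>m. \<not> fin_supp m \<longrightarrow> f m = 0)
     \<and> (\<exists>d. \<forall>m. f m \<noteq> 0 \<longrightarrow> mdeg m \<le> d)
     \<and> (\<forall>\<sigma> m. bij \<sigma> \<longrightarrow> f (m \<circ> \<sigma>) = f m)"

definition irreducible_Lambda :: "series \<Rightarrow> bool" where
  "irreducible_Lambda f \<longleftrightarrow> sym_fun f \<and> \<not> series_const f
     \<and> \<not> (\<exists>g. sym_fun g \<and> series_mult f g = series_one)
     \<and> \<not> (\<exists>g h. sym_fun g \<and> sym_fun h \<and> \<not> series_const g \<and> \<not> series_const h
              \<and> f = series_mult g h)"

definition proper_coloring :: "'a set \<Rightarrow> ('a \<Rightarrow> 'a \<Rightarrow> bool) \<Rightarrow> ('a \<Rightarrow> nat) \<Rightarrow> bool" where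
  "proper_coloring V E \<kappa> \<longleftrightarrow> (\<forall>u\<in>V. \<forall>v\<in>V. E u v \<longrightarrow> \<kappa> u \<noteq> \<kappa> v)"

definition chromatic_symfun :: "'a set \<Rightarrow> ('a \<Rightarrow> 'a \<Rightarrow> bool) \<Rightarrow> series" where
  "chromatic_symfun V E = (\<lambda>m. of_nat (card {\<kappa> \<in> V \<rightarrow>\<^sub>E (UNIV :: nat set).
       proper_coloring V E \<kappa> \<and> (\<forall>i. m i = card {v\<in>V. \<kappa> v = i})}))"

end

theory Submission
  imports Defs "HOL-Computational_Algebra.Polynomial"
begin

definition Mon :: "nat \<Rightarrow> nat \<Rightarrow> monom set" where
  "Mon N D = {m. (\<forall>i. N \<le> i \<longrightarrow> m i = 0) \<and> (\<forall>i. m i \<le> D)}"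

definition bnd :: "series \<Rightarrow> nat \<Rightarrow> bool" where
  "bnd f D \<longleftrightarrow> (\<forall>m. f m \<noteq> 0 \<longrightarrow> fin_supp m \<and> mdeg m \<le> D)"

lemma finite_Mon: "finite (Mon N D)"
proof -
  have "Mon N D \<subseteq> (\<lambda>f i. if i < N then f i else 0) ` ({..<N} \<rightarrow>\<^sub>E {..D})"
  proof
    fix m assume m: "m \<in> Mon N D"
    have "m = (\<lambda>i. if i < N then (restrict m {..<N}) i else 0)"
      using m by (auto simp: Mon_def fun_eq_iff)
    moreover have "restrict m {..<N} \<in> {..<N} \<rightarrow>\<^sub>E {..D}" using m by (auto simp: Mon_def)
    ultimately show "m \<in> (\<lambda>f i. if i < N then f i else 0) ` ({..<N} \<rightarrow>\<^sub>E {..D})" by blast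
  qed
  moreover have "finite ({..<N} \<rightarrow>\<^sub>E {..D})" by (simp add: finite_PiE)
  ultimately show ?thesis by (meson finite_surj)
qed

lemma mdeg_eq: "{i. m i \<noteq> 0} \<subseteq> A \<Longrightarrow> finite A \<Longrightarrow> mdeg m = (\<Sum>i\<in>A. m i)"
  unfolding mdeg_def by (rule sum.mono_neutral_left) auto

lemma fin_supp_bound: "fin_supp m \<Longrightarrow> \<exists>K. \<forall>i. K \<le> i \<longrightarrow> m i = 0"
  unfolding fin_supp_def
proof -
  assume "finite {i. m i \<noteq> 0}"
  then obtain K where K: "\<forall>n\<in>{i. m i \<noteq> 0}. n < K" using finite_nat_set_iff_bounded by blast
  have "\<forall>i. K \<le> i \<longrightarrow> m i = 0"
  proof (intro allI impI)
    fix i assume "K \<le> i"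
    show "m i = 0"
    proof (rule ccontr)
      assume "m i \<noteq> 0" hence "i < K" using K by blast
      with \<open>K \<le> i\<close> show False by simp
    qed
  qed
  thus ?thesis by blast
qed

lemma bound_fin_supp: "\<forall>i. K \<le> i \<longrightarrow> m i = 0 \<Longrightarrow> fin_supp m"
  unfolding fin_supp_def
proof (rule finite_subset[of _ "{..<K}"])
  assume "\<forall>i. K \<le> i \<longrightarrow> m i = 0"
  hence "\<And>i. m i \<noteq> 0 \<Longrightarrow> i < K" by (meson not_less)
  thus "{i. m i \<noteq> 0} \<subseteq> {..<K}" by blast
qed simp

lemma mdeg_K: "\<forall>i. K \<le> i \<longrightarrow> m i = 0 \<Longrightarrow> mdeg m = (\<Sum>i<K. m i)"
proof (rule mdeg_eq)
  assume "\<forall>i. K \<le> i \<longrightarrow> m i = 0"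
  hence "\<And>i. m i \<noteq> 0 \<Longrightarrow> i < K" by (meson not_less)
  thus "{i. m i \<noteq> 0} \<subseteq> {..<K}" by blast
qed simp

lemma entry_le_mdeg: "fin_supp m \<Longrightarrow> m i \<le> mdeg m"
proof -
  assume "fin_supp m"
  then obtain K where K: "\<forall>j. K \<le> j \<longrightarrow> m j = 0" using fin_supp_bound by blast
  define K' where "K' = max K (Suc i)"
  have K': "\<forall>j. K' \<le> j \<longrightarrow> m j = 0" using K by (auto simp: K'_def)
  have "m i \<le> (\<Sum>j<K'. m j)" by (rule member_le_sum) (auto simp: K'_def)
  thus ?thesis using mdeg_K[OF K'] by simp
qed

lemma mdeg_zero_iff: "fin_supp m \<Longrightarrow> mdeg m = 0 \<longleftrightarrow> m = (\<lambda>_. 0)"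
proof -
  assume f: "fin_supp m"
  have "mdeg m = 0 \<longleftrightarrow> (\<forall>i\<in>{i. m i \<noteq> 0}. m i = 0)"
    unfolding mdeg_def using f unfolding fin_supp_def by (rule sum_eq_0_iff)
  also have "\<dots> \<longleftrightarrow> m = (\<lambda>_. 0)" by (auto simp: fun_eq_iff)
  finally show ?thesis .
qed

lemma mdeg_add: "fin_supp a \<Longrightarrow> fin_supp b \<Longrightarrow> mdeg (\<lambda>i. a i + b i) = mdeg a + mdeg b"
proof -
  assume "fin_supp a" "fin_supp b"
  then obtain K1 K2 where K1: "\<forall>j. K1 \<le> j \<longrightarrow> a j = 0" and K2: "\<forall>j. K2 \<le> j \<longrightarrow> b j = 0"
    using fin_supp_bound by blast
  let ?K = "max K1 K2"
  have "mdeg a = (\<Sum>j<?K. a j)" by (rule mdeg_K) (use K1 in auto)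
  moreover have "mdeg b = (\<Sum>j<?K. b j)" by (rule mdeg_K) (use K2 in auto)
  moreover have "mdeg (\<lambda>i. a i + b i) = (\<Sum>j<?K. a j + b j)" by (rule mdeg_K) (use K1 K2 in auto)
  ultimately show ?thesis by (simp add: sum.distrib)
qed

lemma le_fin_supp: "\<forall>i. (a::monom) i \<le> m i \<Longrightarrow> fin_supp m \<Longrightarrow> fin_supp a"
  unfolding fin_supp_def
proof (rule finite_subset[of _ "{i. m i \<noteq> 0}"])
  assume "\<forall>i. a i \<le> m i"
  hence "\<And>i. a i \<noteq> 0 \<Longrightarrow> m i \<noteq> 0"
  proof -
    fix i assume "\<forall>i. a i \<le> m i" "a i \<noteq> 0"
    hence "a i \<le> m i" by blast
    with \<open>a i \<noteq> 0\<close> show "m i \<noteq> 0" by linarith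
  qed
  thus "{i. a i \<noteq> 0} \<subseteq> {i. m i \<noteq> 0}" by blast
qed

lemma minus_decomp: "\<forall>i. (a::monom) i \<le> m i \<Longrightarrow> m = (\<lambda>i. a i + (m i - a i))"
proof
  fix x assume "\<forall>i. a i \<le> m i"
  hence "a x \<le> m x" by blast
  thus "m x = a x + (m x - a x)" by simp
qed

lemma mdeg_minus: "\<forall>i. (a::monom) i \<le> m i \<Longrightarrow> fin_supp m \<Longrightarrow> mdeg a + mdeg (\<lambda>i. m i - a i) = mdeg m"
proof -
  assume a: "\<forall>i. a i \<le> m i" and f: "fin_supp m"
  have fa: "fin_supp a" using le_fin_supp[OF a f] .
  have fb: "fin_supp (\<lambda>i. m i - a i)" using le_fin_supp[of "\<lambda>i. m i - a i" m] f by auto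
  from minus_decomp[OF a] have "mdeg m = mdeg (\<lambda>i. a i + (m i - a i))" by (rule arg_cong)
  with mdeg_add[OF fa fb] show ?thesis by linarith
qed

lemma finite_le: "fin_supp m \<Longrightarrow> finite {a. \<forall>i. a i \<le> m i}"
proof -
  assume "fin_supp m"
  then obtain K where K: "\<forall>j. K \<le> j \<longrightarrow> m j = 0" using fin_supp_bound by blast
  have "{a. \<forall>i. a i \<le> m i} \<subseteq> Mon K (mdeg m)"
  proof
    fix a assume "a \<in> {a. \<forall>i. a i \<le> m i}"
    hence a: "\<forall>i. a i \<le> m i" by simp
    have "\<forall>i. K \<le> i \<longrightarrow> a i = 0"
    proof (intro allI impI)
      fix i assume "K \<le> i" thus "a i = 0" using a[rule_format, of i] K by simp
    qed
    moreover have "\<forall>i. a i \<le> mdeg m"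
    proof
      fix i show "a i \<le> mdeg m" using a[rule_format, of i] entry_le_mdeg[OF \<open>fin_supp m\<close>, of i] by linarith
    qed
    ultimately show "a \<in> Mon K (mdeg m)" by (simp add: Mon_def)
  qed
  thus ?thesis using finite_Mon finite_subset by blast
qed

lemma series_mult_zero: "series_mult g h (\<lambda>_. 0) = g (\<lambda>_. 0) * h (\<lambda>_. 0)"
proof -
  have "{a::monom. \<forall>i. a i \<le> 0} = {\<lambda>_. 0}" by (auto simp: fun_eq_iff)
  thus ?thesis by (simp add: series_mult_def)
qed


lemma base_bound: "B > 0 \<Longrightarrow> \<forall>i<K. x i < B \<Longrightarrow> (\<Sum>i<K. x i * B^i) < (B::nat)^K"
proof (induction K)
  case 0 thus ?case by simp
next
  case (Suc K)
  have IH: "(\<Sum>i<K. x i * B^i) < B^K" using Suc by simp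
  have "x K \<le> B - 1" using Suc.prems by auto
  hence "x K * B^K \<le> (B - 1) * B^K" by (rule mult_right_mono) simp
  moreover have "(\<Sum>i<Suc K. x i * B^i) = (\<Sum>i<K. x i * B^i) + x K * B^K" by simp
  ultimately have "(\<Sum>i<Suc K. x i * B^i) < B^K + (B - 1) * B^K" using IH by linarith
  also have "\<dots> = B * B^K" using \<open>B > 0\<close> by (cases B) auto
  finally show ?case by simp
qed

lemma base_inj: "B > 0 \<Longrightarrow> \<forall>i<K. x i < B \<Longrightarrow> \<forall>i<K. y i < B \<Longrightarrow>
   (\<Sum>i<K. x i * B^i) = (\<Sum>i<K. y i * (B::nat)^i) \<Longrightarrow> \<forall>i<K. x i = y i"
proof (induction K)
  case 0 thus ?case by simp
next
  case (Suc K)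
  let ?Sx = "\<Sum>i<K. x i * B^i" and ?Sy = "\<Sum>i<K. y i * B^i"
  have bx: "?Sx < B^K" using base_bound[of B K x] Suc.prems by simp
  have by': "?Sy < B^K" using base_bound[of B K y] Suc.prems by simp
  have eq: "?Sx + x K * B^K = ?Sy + y K * B^K" using Suc.prems(4) by simp
  have pos: "B^K > 0" using \<open>B > 0\<close> by simp
  have "(?Sx + x K * B^K) div B^K = x K" using bx pos by simp
  moreover have "(?Sy + y K * B^K) div B^K = y K" using by' pos by simp
  ultimately have xK: "x K = y K" using eq by simp
  hence "?Sx = ?Sy" using eq by simp
  moreover have px: "\<forall>i<K. x i < B" using Suc.prems(2) by simp
  moreover have py: "\<forall>i<K. y i < B" using Suc.prems(3) by simp
  ultimately have h: "\<forall>i<K. x i = y i" using Suc.IH[OF Suc.prems(1)] by blast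
  show ?case
  proof (intro allI impI)
    fix i assume "i < Suc K" thus "x i = y i" using h xK by (cases "i = K") auto
  qed
qed

lemma sum_remove_single:
  assumes "finite L" "a \<in> L" "\<And>x. x \<in> L \<Longrightarrow> x \<noteq> a \<Longrightarrow> F x = 0"
  shows "sum F L = (F a :: complex)"
proof -
  have "sum F L = F a + sum F (L - {a})" using assms by (simp add: sum.remove)
  moreover have "sum F (L - {a}) = 0" using assms by (intro sum.neutral) auto
  ultimately show ?thesis by simp
qed

lemma ex_max_on: "finite A \<Longrightarrow> A \<noteq> {} \<Longrightarrow> \<exists>a\<in>A. \<forall>a'\<in>A. (w::monom\<Rightarrow>nat) a' \<le> w a"
proof -
  assume fA: "finite A" and ne: "A \<noteq> {}"
  have "Max (w ` A) \<in> w ` A" using fA ne by simp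
  then obtain a where a: "a \<in> A" "w a = Max (w ` A)" by auto
  have "\<forall>a'\<in>A. w a' \<le> w a" using a fA by simp
  thus ?thesis using a by blast
qed

lemma top_prod:
  assumes bf: "bnd f Df" and bg: "bnd g Dg"
    and a0: "f a0 \<noteq> 0" "mdeg a0 = Df" and b0: "g b0 \<noteq> 0" "mdeg b0 = Dg"
  shows "\<exists>m. series_mult f g m \<noteq> 0 \<and> mdeg m = Df + Dg"
proof -
  have fa0: "fin_supp a0" using bf a0 by (simp add: bnd_def)
  have fb0: "fin_supp b0" using bg b0 by (simp add: bnd_def)
  obtain K1 where K1: "\<forall>j. K1 \<le> j \<longrightarrow> a0 j = 0" using fin_supp_bound[OF fa0] by blast
  obtain K2 where K2: "\<forall>j. K2 \<le> j \<longrightarrow> b0 j = 0" using fin_supp_bound[OF fb0] by blast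
  define K where "K = max K1 K2"
  define B where "B = Df + Dg + 1"
  define w where "w = (\<lambda>m::monom. \<Sum>i<K. m i * B^i)"
  define A where "A = {a \<in> Mon K Df. f a \<noteq> 0 \<and> mdeg a = Df}"
  define Bs where "Bs = {b \<in> Mon K Dg. g b \<noteq> 0 \<and> mdeg b = Dg}"
  have a0A: "a0 \<in> A" unfolding A_def Mon_def using a0 K1 entry_le_mdeg[OF fa0] by (auto simp: K_def)
  have b0B: "b0 \<in> Bs" unfolding Bs_def Mon_def using b0 K2 entry_le_mdeg[OF fb0] by (auto simp: K_def)
  have "finite A" unfolding A_def using finite_Mon by simp
  then obtain a where aA: "a \<in> A" and amax: "\<forall>a'\<in>A. w a' \<le> w a" using ex_max_on a0A by blast
  have "finite Bs" unfolding Bs_def using finite_Mon by simp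
  then obtain b where bB: "b \<in> Bs" and bmax: "\<forall>b'\<in>Bs. w b' \<le> w b" using ex_max_on b0B by blast
  have aK: "\<forall>i. K \<le> i \<longrightarrow> a i = 0" and fa: "f a \<noteq> 0" and da: "mdeg a = Df" and aD: "\<forall>i. a i \<le> Df"
    using aA by (auto simp: A_def Mon_def)
  have bK: "\<forall>i. K \<le> i \<longrightarrow> b i = 0" and gb: "g b \<noteq> 0" and db: "mdeg b = Dg" and bD: "\<forall>i. b i \<le> Dg"
    using bB by (auto simp: Bs_def Mon_def)
  define m where "m = (\<lambda>i. a i + b i)"
  have mK: "\<forall>i. K \<le> i \<longrightarrow> m i = 0" using aK bK by (simp add: m_def)
  have fm: "fin_supp m" using bound_fin_supp[OF mK] .
  have dm: "mdeg m = Df + Dg" unfolding m_def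
    using mdeg_add[OF bound_fin_supp[OF aK] bound_fin_supp[OF bK]] da db by simp
  have wm: "w m = w a + w b" by (simp add: w_def m_def sum.distrib algebra_simps)
  have mb: "(\<lambda>i. m i - a i) = b" by (simp add: m_def)
  let ?L = "{x. \<forall>i. x i \<le> m i}"
  have "series_mult f g m = f a * g (\<lambda>i. m i - a i)"
    unfolding series_mult_def
  proof (rule sum_remove_single)
    show "finite ?L" using finite_le[OF fm] .
    show "a \<in> ?L" by (simp add: m_def)
    fix x assume xL: "x \<in> ?L" and xa: "x \<noteq> a"
    show "f x * g (\<lambda>i. m i - x i) = 0"
    proof (rule ccontr)
      assume "f x * g (\<lambda>i. m i - x i) \<noteq> 0"
      hence fx: "f x \<noteq> 0" and gy: "g (\<lambda>i. m i - x i) \<noteq> 0" by auto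
      define y where "y = (\<lambda>i. m i - x i)"
      have xm: "\<forall>i. x i \<le> m i" using xL by simp
      have fsx: "fin_supp x" and dx: "mdeg x \<le> Df" using fx bf by (auto simp: bnd_def)
      have dy: "mdeg y \<le> Dg" using gy bg by (auto simp: bnd_def y_def)
      have "mdeg x + mdeg y = Df + Dg" using mdeg_minus[OF xm fm] dm by (simp add: y_def)
      hence dx': "mdeg x = Df" and dy': "mdeg y = Dg" using dx dy by linarith+
      have xK: "\<forall>i. K \<le> i \<longrightarrow> x i = 0"
      proof (intro allI impI)
        fix i assume "K \<le> i" thus "x i = 0" using xm mK by (metis le_zero_eq)
      qed
      have yK: "\<forall>i. K \<le> i \<longrightarrow> y i = 0" using mK by (simp add: y_def)
      have fsy: "fin_supp y" using bound_fin_supp[OF yK] .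
      have xA: "x \<in> A" unfolding A_def Mon_def using xK fx dx' entry_le_mdeg[OF fsx] by auto
      have yB: "y \<in> Bs" unfolding Bs_def Mon_def using yK gy dy' entry_le_mdeg[OF fsy] by (auto simp: y_def)
      have "m = (\<lambda>i. x i + y i)" unfolding y_def using minus_decomp[OF xm] .
      hence "w m = w x + w y" by (simp add: w_def sum.distrib algebra_simps)
      moreover have "w x \<le> w a" using amax xA by blast
      moreover have "w y \<le> w b" using bmax yB by blast
      ultimately have wxa: "w x = w a" using wm by linarith
      have xD: "\<forall>i. x i \<le> Df" using xA by (simp add: A_def Mon_def)
      have B0: "B > 0" by (simp add: B_def)
      have xB: "\<forall>i<K. x i < B"
      proof (intro allI impI)
        fix i show "x i < B" using xD[rule_format, of i] by (simp add: B_def)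
      qed
      have aB: "\<forall>i<K. a i < B"
      proof (intro allI impI)
        fix i show "a i < B" using aD[rule_format, of i] by (simp add: B_def)
      qed
      have xa': "\<forall>i<K. x i = a i" using base_inj[OF B0 xB aB] wxa by (simp add: w_def)
      have "x = a"
      proof
        fix i show "x i = a i"
        proof (cases "i < K")
          case True thus ?thesis using xa' by blast
        next
          case False thus ?thesis using xK aK by simp
        qed
      qed
      thus False using xa by simp
    qed
  qed
  also have "\<dots> \<noteq> 0" using fa gb mb by simp
  finally show ?thesis using dm by blast
qed


lemma mdeg_pos: "fin_supp m \<Longrightarrow> m \<noteq> (\<lambda>_. 0) \<Longrightarrow> mdeg m > 0"
  using mdeg_zero_iff by blast

lemma low_prod1:
  assumes fm: "fin_supp m" and low: "\<And>a. fin_supp a \<Longrightarrow> mdeg a < mdeg m \<Longrightarrow> g a = 0"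
  shows "series_mult g h m = g m * h (\<lambda>_. 0)"
proof -
  have "series_mult g h m = g m * h (\<lambda>i. m i - m i)"
    unfolding series_mult_def
  proof (rule sum_remove_single)
    show "finite {x. \<forall>i. x i \<le> m i}" using finite_le[OF fm] .
    show "m \<in> {x. \<forall>i. x i \<le> m i}" by simp
    fix x assume xL: "x \<in> {x. \<forall>i. x i \<le> m i}" and xm: "x \<noteq> m"
    have xle: "\<forall>i. x i \<le> m i" using xL by simp
    have fx: "fin_supp x" using le_fin_supp[OF xle fm] .
    have fy: "fin_supp (\<lambda>i. m i - x i)" using le_fin_supp[of "\<lambda>i. m i - x i" m] fm by simp
    have "(\<lambda>i. m i - x i) \<noteq> (\<lambda>_. 0)"
    proof
      assume "(\<lambda>i. m i - x i) = (\<lambda>_. 0)"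
      hence "\<And>i. m i - x i = 0" by metis
      hence "x = m" using xle by (intro ext) (metis diff_is_0_eq le_antisym)
      thus False using xm by simp
    qed
    hence "mdeg (\<lambda>i. m i - x i) > 0" using mdeg_pos[OF fy] by blast
    hence "mdeg x < mdeg m" using mdeg_minus[OF xle fm] by linarith
    hence "g x = 0" using low[OF fx] by blast
    thus "g x * h (\<lambda>i. m i - x i) = 0" by simp
  qed
  thus ?thesis by simp
qed

lemma low_prod2:
  assumes fm: "fin_supp m" and low: "\<And>a. fin_supp a \<Longrightarrow> mdeg a < mdeg m \<Longrightarrow> h a = 0"
  shows "series_mult g h m = g (\<lambda>_. 0) * h m"
proof -
  have "series_mult g h m = g (\<lambda>_. 0) * h (\<lambda>i. m i - 0)"
    unfolding series_mult_def
  proof (rule sum_remove_single)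
    show "finite {x. \<forall>i. x i \<le> m i}" using finite_le[OF fm] .
    show "(\<lambda>_. 0) \<in> {x. \<forall>i. x i \<le> m i}" by simp
    fix x assume xL: "x \<in> {x. \<forall>i. x i \<le> m i}" and x0: "x \<noteq> (\<lambda>_. 0)"
    have xle: "\<forall>i. x i \<le> m i" using xL by simp
    have fx: "fin_supp x" using le_fin_supp[OF xle fm] .
    have fy: "fin_supp (\<lambda>i. m i - x i)" using le_fin_supp[of "\<lambda>i. m i - x i" m] fm by simp
    have "mdeg x > 0" using mdeg_pos[OF fx x0] .
    hence "mdeg (\<lambda>i. m i - x i) < mdeg m" using mdeg_minus[OF xle fm] by linarith
    hence "h (\<lambda>i. m i - x i) = 0" using low[OF fy] by blast
    thus "g x * h (\<lambda>i. m i - x i) = 0" by simp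
  qed
  thus ?thesis by simp
qed

lemma ex_top:
  assumes b: "bnd f D" and fa: "f a \<noteq> 0"
  shows "\<exists>Dm a'. bnd f Dm \<and> f a' \<noteq> 0 \<and> mdeg a' = Dm \<and> mdeg a \<le> Dm"
proof -
  let ?S = "mdeg ` {a. f a \<noteq> 0}"
  have sub: "?S \<subseteq> {..D}" using b by (auto simp: bnd_def)
  hence fin: "finite ?S" using finite_subset by blast
  have ne: "?S \<noteq> {}" using fa by blast
  have "Max ?S \<in> ?S" using fin ne by (rule Max_in)
  then obtain a' where a': "f a' \<noteq> 0" "mdeg a' = Max ?S" by auto
  have le: "\<And>x. f x \<noteq> 0 \<Longrightarrow> mdeg x \<le> Max ?S" using fin by auto
  have "bnd f (Max ?S)" using b le by (auto simp: bnd_def)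
  thus ?thesis using a' le[OF fa] by blast
qed

lemma ex_low:
  assumes fa: "f a \<noteq> 0"
  shows "\<exists>a'. f a' \<noteq> 0 \<and> (\<forall>x. mdeg x < mdeg a' \<longrightarrow> f x = 0)"
proof -
  define d where "d = (LEAST d. \<exists>a. f a \<noteq> 0 \<and> mdeg a = d)"
  have "\<exists>a. f a \<noteq> 0 \<and> mdeg a = d" unfolding d_def by (rule LeastI[of _ "mdeg a"]) (use fa in blast)
  then obtain a' where a': "f a' \<noteq> 0" "mdeg a' = d" by blast
  have "\<forall>x. mdeg x < d \<longrightarrow> f x = 0"
  proof (intro allI impI)
    fix x assume "mdeg x < d"
    thus "f x = 0" unfolding d_def using not_less_Least by blast
  qed
  thus ?thesis using a' by blast
qed

lemma nonconst_ex: "\<not> series_const g \<Longrightarrow> \<exists>m. m \<noteq> (\<lambda>_. 0) \<and> g m \<noteq> 0"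
  unfolding series_const_def by blast

lemma consts_zero:
  assumes bg: "bnd g Dg0" and bh: "bnd h Dh0"
    and hom: "\<And>m. series_mult g h m \<noteq> 0 \<Longrightarrow> mdeg m = n" and n: "n \<ge> 1"
    and ng: "\<not> series_const g" and nh: "\<not> series_const h"
  shows "g (\<lambda>_. 0) = 0 \<and> h (\<lambda>_. 0) = 0"
proof -
  have md0: "mdeg (\<lambda>_. 0) = 0" by (simp add: mdeg_def)
  have "series_mult g h (\<lambda>_. 0) = 0" using hom[of "\<lambda>_. 0"] n md0 by auto
  hence g0h0: "g (\<lambda>_. 0) * h (\<lambda>_. 0) = 0" by (simp add: series_mult_zero)
  obtain mg where mg: "mg \<noteq> (\<lambda>_. 0)" "g mg \<noteq> 0" using nonconst_ex[OF ng] by blast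
  obtain mh where mh: "mh \<noteq> (\<lambda>_. 0)" "h mh \<noteq> 0" using nonconst_ex[OF nh] by blast
  have dmg: "mdeg mg \<ge> 1" using mdeg_pos[OF _ mg(1)] bg mg(2) by (force simp: bnd_def)
  have dmh: "mdeg mh \<ge> 1" using mdeg_pos[OF _ mh(1)] bh mh(2) by (force simp: bnd_def)
  show ?thesis
  proof (rule ccontr)
    assume "\<not> (g (\<lambda>_. 0) = 0 \<and> h (\<lambda>_. 0) = 0)"
    hence "(g (\<lambda>_. 0) = 0 \<and> h (\<lambda>_. 0) \<noteq> 0) \<or> (h (\<lambda>_. 0) = 0 \<and> g (\<lambda>_. 0) \<noteq> 0)" using g0h0 by auto
    thus False
    proof
      assume c: "g (\<lambda>_. 0) = 0 \<and> h (\<lambda>_. 0) \<noteq> 0"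
      obtain a where a: "g a \<noteq> 0" "\<forall>x. mdeg x < mdeg a \<longrightarrow> g x = 0" using ex_low[of g mg, OF mg(2)] by blast
      have fa: "fin_supp a" using a bg by (simp add: bnd_def)
      have "series_mult g h a = g a * h (\<lambda>_. 0)" using low_prod1[OF fa] a by blast
      hence "series_mult g h a \<noteq> 0" using a c by simp
      hence da: "mdeg a = n" using hom by blast
      obtain Dg a' where tg: "bnd g Dg" "g a' \<noteq> 0" "mdeg a' = Dg" "mdeg a \<le> Dg" using ex_top[OF bg a(1)] by blast
      obtain Dh b' where th: "bnd h Dh" "h b' \<noteq> 0" "mdeg b' = Dh" "mdeg mh \<le> Dh" using ex_top[OF bh mh(2)] by blast
      obtain m where "series_mult g h m \<noteq> 0" "mdeg m = Dg + Dh" using top_prod[OF tg(1) th(1) tg(2,3) th(2,3)] by blast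
      hence "Dg + Dh = n" using hom by simp
      thus False using da tg(4) th(4) dmh by linarith
    next
      assume c: "h (\<lambda>_. 0) = 0 \<and> g (\<lambda>_. 0) \<noteq> 0"
      obtain a where a: "h a \<noteq> 0" "\<forall>x. mdeg x < mdeg a \<longrightarrow> h x = 0" using ex_low[of h mh, OF mh(2)] by blast
      have fa: "fin_supp a" using a bh by (simp add: bnd_def)
      have "series_mult g h a = g (\<lambda>_. 0) * h a" using low_prod2[OF fa] a by blast
      hence "series_mult g h a \<noteq> 0" using a c by simp
      hence da: "mdeg a = n" using hom by blast
      obtain Dg a' where tg: "bnd g Dg" "g a' \<noteq> 0" "mdeg a' = Dg" "mdeg mg \<le> Dg" using ex_top[OF bg mg(2)] by blast
      obtain Dh b' where th: "bnd h Dh" "h b' \<noteq> 0" "mdeg b' = Dh" "mdeg a \<le> Dh" using ex_top[OF bh a(1)] by blast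
      obtain m where "series_mult g h m \<noteq> 0" "mdeg m = Dg + Dh" using top_prod[OF tg(1) th(1) tg(2,3) th(2,3)] by blast
      hence "Dg + Dh = n" using hom by simp
      thus False using da tg(4) th(4) dmg by linarith
    qed
  qed
qed


definition Pspec :: "series \<Rightarrow> nat \<Rightarrow> nat \<Rightarrow> complex" where
  "Pspec f N D = (\<Sum>m\<in>Mon N D. f m)"

lemma mult_spec:
  assumes bg: "bnd g Dg" and bh: "bnd h Dh"
  shows "Pspec (series_mult g h) N (Dg + Dh) = Pspec g N (Dg + Dh) * Pspec h N (Dg + Dh)"
proof -
  define D where "D = Dg + Dh"
  define M where "M = Mon N D"
  have fM: "finite M" unfolding M_def by (rule finite_Mon)
  have Lsub: "\<And>m. m \<in> M \<Longrightarrow> {a. \<forall>i. a i \<le> m i} = {a \<in> M. \<forall>i. a i \<le> m i}"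
  proof -
    fix m assume m: "m \<in> M"
    show "{a. \<forall>i. a i \<le> m i} = {a \<in> M. \<forall>i. a i \<le> m i}"
    proof (intro set_eqI iffI)
      fix a assume "a \<in> {a. \<forall>i. a i \<le> m i}"
      hence a: "\<forall>i. a i \<le> m i" by simp
      have "\<forall>i. N \<le> i \<longrightarrow> a i = 0"
      proof (intro allI impI)
        fix i assume "N \<le> i" hence "m i = 0" using m by (simp add: M_def Mon_def)
        thus "a i = 0" using a[rule_format, of i] by simp
      qed
      moreover have "\<forall>i. a i \<le> D"
      proof
        fix i have "m i \<le> D" using m by (simp add: M_def Mon_def)
        thus "a i \<le> D" using a[rule_format, of i] by linarith
      qed
      ultimately show "a \<in> {a \<in> M. \<forall>i. a i \<le> m i}" using a by (simp add: M_def Mon_def)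
    qed simp
  qed
  have "Pspec (series_mult g h) N D = (\<Sum>m\<in>M. \<Sum>a\<in>{a \<in> M. \<forall>i. a i \<le> m i}. g a * h (\<lambda>i. m i - a i))"
    unfolding Pspec_def series_mult_def M_def[symmetric] by (rule sum.cong) (simp_all add: Lsub)
  also have "\<dots> = (\<Sum>a\<in>M. \<Sum>m\<in>{m \<in> M. \<forall>i. a i \<le> m i}. g a * h (\<lambda>i. m i - a i))"
    by (rule sum.swap_restrict[OF fM fM])
  also have "\<dots> = (\<Sum>a\<in>M. \<Sum>b\<in>M. g a * h b)"
  proof (rule sum.cong[OF refl])
    fix a assume aM: "a \<in> M"
    show "(\<Sum>m\<in>{m \<in> M. \<forall>i. a i \<le> m i}. g a * h (\<lambda>i. m i - a i)) = (\<Sum>b\<in>M. g a * h b)"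
    proof (cases "g a = 0")
      case True thus ?thesis by simp
    next
      case False
      have aDg: "\<forall>i. a i \<le> Dg"
      proof
        fix i have "fin_supp a" "mdeg a \<le> Dg" using bg False by (auto simp: bnd_def)
        thus "a i \<le> Dg" using entry_le_mdeg[of a i] by linarith
      qed
      let ?T = "{b \<in> M. \<forall>i. a i + b i \<le> D}"
      have "(\<Sum>m\<in>{m \<in> M. \<forall>i. a i \<le> m i}. g a * h (\<lambda>i. m i - a i)) = (\<Sum>b\<in>?T. g a * h b)"
      proof (rule sum.reindex_bij_witness[where i="\<lambda>b i. a i + b i" and j="\<lambda>m i. m i - a i"])
        fix m assume m: "m \<in> {m \<in> M. \<forall>i. a i \<le> m i}"
        have mM: "m \<in> M" and am: "\<forall>i. a i \<le> m i" using m by auto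
        show "(\<lambda>i. a i + (m i - a i)) = m" using minus_decomp[OF am, symmetric] .
        have "\<forall>i. N \<le> i \<longrightarrow> m i - a i = 0" using mM by (simp add: M_def Mon_def)
        moreover have "\<forall>i. m i - a i \<le> D"
        proof
          fix i have "m i \<le> D" using mM by (simp add: M_def Mon_def)
          thus "m i - a i \<le> D" by linarith
        qed
        moreover have "\<forall>i. a i + (m i - a i) \<le> D"
        proof
          fix i have "m i \<le> D" using mM by (simp add: M_def Mon_def)
          thus "a i + (m i - a i) \<le> D" using am[rule_format, of i] by linarith
        qed
        ultimately show "(\<lambda>i. m i - a i) \<in> ?T" by (simp add: M_def Mon_def)
        show "g a * h (\<lambda>i. m i - a i) = g a * h (\<lambda>i. m i - a i)" by (rule refl)
      next
        fix b assume b: "b \<in> ?T"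
        have bM: "b \<in> M" and abD: "\<forall>i. a i + b i \<le> D" using b by auto
        show "(\<lambda>i. a i + b i - a i) = b" by simp
        have "\<forall>i. N \<le> i \<longrightarrow> a i + b i = 0" using aM bM by (simp add: M_def Mon_def)
        thus "(\<lambda>i. a i + b i) \<in> {m \<in> M. \<forall>i. a i \<le> m i}" using abD by (simp add: M_def Mon_def)
      qed
      also have "\<dots> = (\<Sum>b\<in>M. g a * h b)"
      proof (rule sum.mono_neutral_left[OF fM])
        show "?T \<subseteq> M" by blast
        show "\<forall>b\<in>M - ?T. g a * h b = 0"
        proof
          fix b assume b: "b \<in> M - ?T"
          then obtain i where "\<not> a i + b i \<le> D" by auto
          hence i: "a i + b i > D" by linarith
          hence "b i > Dh" using aDg[rule_format, of i] by (simp add: D_def)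
          have "h b = 0"
          proof (rule ccontr)
            assume "h b \<noteq> 0"
            hence "fin_supp b" "mdeg b \<le> Dh" using bh by (auto simp: bnd_def)
            thus False using entry_le_mdeg[of b i] \<open>b i > Dh\<close> by linarith
          qed
          thus "g a * h b = 0" by simp
        qed
      qed
      finally show ?thesis .
    qed
  qed
  also have "\<dots> = Pspec g N D * Pspec h N D"
    unfolding Pspec_def M_def[symmetric] by (rule sum_product[symmetric])
  finally show ?thesis unfolding D_def .
qed

lemma gchoose_poly: "\<exists>p. \<forall>x::complex. x gchoose k = poly p x"
proof (induction k)
  case 0 thus ?case by (intro exI[of _ 1]) simp
next
  case (Suc k)
  then obtain p where p: "\<forall>x::complex. x gchoose k = poly p x" by blast
  define q where "q = smult (1 / of_nat (Suc k)) ([:0, 1:] * pcompose p [:-1, 1:])"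
  have "\<forall>x::complex. x gchoose Suc k = poly q x"
  proof
    fix x :: complex
    have "of_nat (Suc k) * (x gchoose Suc k) = x * ((x - 1) gchoose k)" by (rule gbinomial_absorption)
    hence "x gchoose Suc k = x * ((x - 1) gchoose k) / of_nat (Suc k)"
      by (simp add: field_simps del: of_nat_Suc)
    also have "\<dots> = poly q x" using p by (simp add: q_def poly_pcompose field_simps del: of_nat_Suc)
    finally show "x gchoose Suc k = poly q x" .
  qed
  thus ?case by blast
qed

lemma gchoose_poly_Suc: "\<exists>p. \<forall>x::complex. x gchoose Suc k = x * poly p x"
proof -
  obtain p where p: "\<forall>x::complex. x gchoose k = poly p x" using gchoose_poly by blast
  define q where "q = smult (1 / of_nat (Suc k)) (pcompose p [:-1, 1:])"
  have "\<forall>x::complex. x gchoose Suc k = x * poly q x"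
  proof
    fix x :: complex
    have "of_nat (Suc k) * (x gchoose Suc k) = x * ((x - 1) gchoose k)" by (rule gbinomial_absorption)
    hence "x gchoose Suc k = x * ((x - 1) gchoose k) / of_nat (Suc k)"
      by (simp add: field_simps del: of_nat_Suc)
    also have "\<dots> = x * poly q x" using p by (simp add: q_def poly_pcompose field_simps del: of_nat_Suc)
    finally show "x gchoose Suc k = x * poly q x" .
  qed
  thus ?thesis by blast
qed

lemma final_poly:
  fixes rg rh :: "complex poly"
  assumes eq: "\<And>N. N \<ge> 1 \<Longrightarrow> of_nat N * poly rg (of_nat N) * (of_nat N * poly rh (of_nat N))
                 = of_nat N * (of_nat N - 1) ^ k"
  shows False
proof -
  define d where "d = [:0, 1:] * rg * rh - [:-1, 1:] ^ k"
  have roots: "\<And>N. N \<ge> 1 \<Longrightarrow> poly d (of_nat N) = 0"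
  proof -
    fix N :: nat assume N: "N \<ge> 1"
    have nz: "(of_nat N :: complex) \<noteq> 0" using N by simp
    have "of_nat N * (of_nat N * poly rg (of_nat N) * poly rh (of_nat N)) = of_nat N * (of_nat N - 1 :: complex) ^ k"
      using eq[OF N] by (simp add: algebra_simps)
    hence "of_nat N * poly rg (of_nat N) * poly rh (of_nat N) = (of_nat N - 1 :: complex) ^ k"
      using nz by simp
    thus "poly d (of_nat N) = 0" by (simp add: d_def poly_power mult.assoc)
  qed
  have "d = 0"
  proof (rule ccontr)
    assume "d \<noteq> 0"
    hence fin: "finite {x. poly d x = 0}" by (rule poly_roots_finite)
    have "of_nat ` {1..} \<subseteq> {x::complex. poly d x = 0}" using roots by auto
    hence "finite (of_nat ` {1::nat..} :: complex set)" using fin finite_subset by blast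
    moreover have "inj_on (of_nat :: nat \<Rightarrow> complex) {1..}" by (simp add: inj_on_def)
    ultimately have "finite {1::nat..}" using finite_imageD by blast
    thus False using infinite_Ici[of "1::nat"] by simp
  qed
  hence "poly d 0 = 0" by simp
  thus False by (simp add: d_def poly_power)
qed


lemma ex_perm:
  assumes fS: "finite (S::nat set)"
  shows "\<exists>\<sigma>. bij \<sigma> \<and> \<sigma> ` {..<card S} = S"
proof -
  define A where "A = {..<card S}"
  have fA: "finite A" by (simp add: A_def)
  have cA: "card A = card S" by (simp add: A_def)
  have "card (A - S) = card A - card (A \<inter> S)" using fA by (metis card_Diff_subset_Int finite_Int)
  moreover have "card (S - A) = card S - card (S \<inter> A)" using fS by (metis card_Diff_subset_Int finite_Int)
  ultimately have "card (A - S) = card (S - A)" using cA by (simp add: Int_commute)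
  then obtain f where f: "bij_betw f (A - S) (S - A)" using finite_same_card_bij fA fS by blast
  define \<sigma> where "\<sigma> = (\<lambda>x. if x \<in> A - S then f x else if x \<in> S - A then inv_into (A - S) f x else x)"
  have b1: "bij_betw \<sigma> (A - S) (S - A)"
    using f by (rule bij_betw_cong[THEN iffD1, rotated]) (simp add: \<sigma>_def)
  have f': "bij_betw (inv_into (A - S) f) (S - A) (A - S)" using f by (rule bij_betw_inv_into)
  have b2: "bij_betw \<sigma> (S - A) (A - S)"
    using f' by (rule bij_betw_cong[THEN iffD1, rotated]) (auto simp: \<sigma>_def)
  define R where "R = - ((A - S) \<union> (S - A))"
  have b3: "bij_betw \<sigma> R R"
  proof -
    have "bij_betw id R R" by simp
    thus ?thesis by (rule bij_betw_cong[THEN iffD1, rotated]) (auto simp: \<sigma>_def R_def)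
  qed
  have "bij_betw \<sigma> ((A - S) \<union> (S - A)) ((S - A) \<union> (A - S))"
    by (rule bij_betw_combine[OF b1 b2]) blast
  hence "bij_betw \<sigma> (((A - S) \<union> (S - A)) \<union> R) (((S - A) \<union> (A - S)) \<union> R)"
    by (rule bij_betw_combine[OF _ b3]) (auto simp: R_def)
  moreover have "((A - S) \<union> (S - A)) \<union> R = UNIV" by (auto simp: R_def)
  moreover have "((S - A) \<union> (A - S)) \<union> R = UNIV" by (auto simp: R_def)
  ultimately have bij: "bij \<sigma>" by simp
  have "\<sigma> ` A = \<sigma> ` (A \<inter> S) \<union> \<sigma> ` (A - S)" by blast
  also have "\<sigma> ` (A \<inter> S) = A \<inter> S" by (force simp: \<sigma>_def)
  also have "\<sigma> ` (A - S) = S - A" using b1 by (simp add: bij_betw_def)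
  finally have "\<sigma> ` A = S" by blast
  thus ?thesis using bij A_def by blast
qed

definition suppm :: "monom \<Rightarrow> nat set" where "suppm m = {i. m i \<noteq> 0}"

definition QS :: "nat \<Rightarrow> nat set \<Rightarrow> monom set" where
  "QS D S = {m. suppm m = S \<and> (\<forall>i. m i \<le> D)}"

lemma finite_QS: "finite S \<Longrightarrow> finite (QS D S)"
proof -
  assume "finite S"
  then obtain K where K: "\<forall>n\<in>S. n < K" using finite_nat_set_iff_bounded by blast
  have "QS D S \<subseteq> Mon K D"
  proof
    fix m assume "m \<in> QS D S"
    hence s: "suppm m = S" and d: "\<forall>i. m i \<le> D" by (auto simp: QS_def)
    have "\<forall>i. K \<le> i \<longrightarrow> m i = 0"
    proof (intro allI impI)
      fix i assume "K \<le> i"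
      show "m i = 0"
      proof (rule ccontr)
        assume "m i \<noteq> 0" hence "i \<in> S" using s by (auto simp: suppm_def)
        hence "i < K" using K by blast
        thus False using \<open>K \<le> i\<close> by simp
      qed
    qed
    thus "m \<in> Mon K D" using d by (simp add: Mon_def)
  qed
  thus ?thesis using finite_Mon finite_subset by blast
qed

lemma QS_Mon: "S \<subseteq> {..<N} \<Longrightarrow> {m \<in> Mon N D. suppm m = S} = QS D S"
proof (intro set_eqI iffI)
  fix m assume "m \<in> {m \<in> Mon N D. suppm m = S}"
  thus "m \<in> QS D S" by (simp add: Mon_def QS_def)
next
  fix m assume S: "S \<subseteq> {..<N}" and m: "m \<in> QS D S"
  have s: "suppm m = S" and d: "\<forall>i. m i \<le> D" using m by (auto simp: QS_def)
  have "\<forall>i. N \<le> i \<longrightarrow> m i = 0"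
  proof (intro allI impI)
    fix i assume "N \<le> i"
    show "m i = 0"
    proof (rule ccontr)
      assume "m i \<noteq> 0" hence "i \<in> S" using s by (auto simp: suppm_def)
      hence "i < N" using S by blast
      thus False using \<open>N \<le> i\<close> by simp
    qed
  qed
  thus "m \<in> {m \<in> Mon N D. suppm m = S}" using d s by (simp add: Mon_def)
qed

lemma sym_apply: "sym_fun g \<Longrightarrow> bij \<sigma> \<Longrightarrow> g (m \<circ> \<sigma>) = g m"
  unfolding sym_fun_def by blast

lemma QS_sym:
  assumes sg: "sym_fun g" and fS: "finite S"
  shows "sum g (QS D S) = sum g (QS D {..<card S})"
proof -
  obtain \<sigma> where bij: "bij \<sigma>" and im: "\<sigma> ` {..<card S} = S" using ex_perm[OF fS] by blast
  have inv1: "\<And>x. \<sigma> (inv \<sigma> x) = x" using bij by (simp add: bij_is_surj surj_f_inv_f)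
  have inv2: "\<And>x. inv \<sigma> (\<sigma> x) = x" using bij by (simp add: bij_is_inj inv_f_f)
  have memS: "\<And>x. \<sigma> x \<in> S \<longleftrightarrow> x < card S"
  proof -
    fix x
    have "\<sigma> x \<in> S \<longleftrightarrow> \<sigma> x \<in> \<sigma> ` {..<card S}" using im by simp
    also have "\<dots> \<longleftrightarrow> x \<in> {..<card S}" using bij_is_inj[OF bij] by (simp add: inj_image_mem_iff)
    finally show "\<sigma> x \<in> S \<longleftrightarrow> x < card S" by simp
  qed
  have bij': "bij (inv \<sigma>)" using bij by (rule bij_imp_bij_inv)
  show ?thesis
  proof (rule sum.reindex_bij_witness[where i="\<lambda>m. m \<circ> inv \<sigma>" and j="\<lambda>m. m \<circ> \<sigma>"])
    fix m assume m: "m \<in> QS D S"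
    show "m \<circ> \<sigma> \<circ> inv \<sigma> = m" by (rule ext) (simp add: inv1)
    have s: "suppm m = S" and d: "\<forall>i. m i \<le> D" using m by (auto simp: QS_def)
    have "suppm (m \<circ> \<sigma>) = {..<card S}"
    proof (intro set_eqI)
      fix x
      have "x \<in> suppm (m \<circ> \<sigma>) \<longleftrightarrow> \<sigma> x \<in> suppm m" by (simp add: suppm_def)
      also have "\<dots> \<longleftrightarrow> x < card S" using s memS by simp
      finally show "x \<in> suppm (m \<circ> \<sigma>) \<longleftrightarrow> x \<in> {..<card S}" by simp
    qed
    thus "m \<circ> \<sigma> \<in> QS D {..<card S}" using d by (simp add: QS_def)
    show "g (m \<circ> \<sigma>) = g m" by (rule sym_apply[OF sg bij])
  next
    fix m assume m: "m \<in> QS D {..<card S}"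
    show "m \<circ> inv \<sigma> \<circ> \<sigma> = m" by (rule ext) (simp add: inv2)
    have s: "suppm m = {..<card S}" and d: "\<forall>i. m i \<le> D" using m by (auto simp: QS_def)
    have "suppm (m \<circ> inv \<sigma>) = S"
    proof (intro set_eqI)
      fix x
      have "x \<in> suppm (m \<circ> inv \<sigma>) \<longleftrightarrow> inv \<sigma> x \<in> suppm m" by (simp add: suppm_def)
      also have "\<dots> \<longleftrightarrow> inv \<sigma> x < card S" using s by simp
      also have "\<dots> \<longleftrightarrow> \<sigma> (inv \<sigma> x) \<in> S" using memS by simp
      finally show "x \<in> suppm (m \<circ> inv \<sigma>) \<longleftrightarrow> x \<in> S" using inv1 by simp
    qed
    thus "m \<circ> inv \<sigma> \<in> QS D S" using d by (simp add: QS_def)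
  qed
qed

lemma sum_pow_card:
  fixes t :: "nat \<Rightarrow> complex"
  shows "(\<Sum>S\<in>Pow {..<N}. t (card S)) = (\<Sum>j\<le>N. of_nat (N choose j) * t j)"
proof -
  have "(\<Sum>S\<in>Pow {..<N}. t (card S)) = (\<Sum>j\<in>{..N}. \<Sum>S\<in>{S \<in> Pow {..<N}. card S = j}. t (card S))"
  proof (rule sum.group[symmetric])
    show "finite (Pow {..<N::nat})" by simp
    show "finite {..N}" by simp
    show "card ` Pow {..<N} \<subseteq> {..N}"
    proof
      fix j assume "j \<in> card ` Pow {..<N}"
      then obtain S where "S \<subseteq> {..<N}" "j = card S" by auto
      hence "j \<le> card {..<N}" using card_mono by blast
      thus "j \<in> {..N}" by simp
    qed
  qed
  also have "\<dots> = (\<Sum>j\<le>N. of_nat (N choose j) * t j)"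
  proof (rule sum.cong[OF refl])
    fix j
    have "(\<Sum>S\<in>{S \<in> Pow {..<N}. card S = j}. t (card S)) = (\<Sum>S\<in>{S \<in> Pow {..<N}. card S = j}. t j)"
      by (rule sum.cong) auto
    also have "\<dots> = of_nat (card {S \<in> Pow {..<N}. card S = j}) * t j" by simp
    also have "{S \<in> Pow {..<N}. card S = j} = {S. S \<subseteq> {..<N} \<and> card S = j}" by auto
    also have "card \<dots> = N choose j" using n_subsets[of "{..<N}" j] by simp
    finally show "(\<Sum>S\<in>{S \<in> Pow {..<N}. card S = j}. t (card S)) = of_nat (N choose j) * t j" by simp
  qed
  finally show ?thesis .
qed

lemma sym_spec:
  assumes sg: "sym_fun g" and g0: "g (\<lambda>_. 0) = 0" and bg: "bnd g D"
  shows "\<exists>r. \<forall>N. Pspec g N D = of_nat N * poly r (of_nat N)"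
proof -
  define t where "t = (\<lambda>j. sum g (QS D {..<j}))"
  have t0: "t 0 = 0"
  proof -
    have "QS D {..<0} = {\<lambda>_. 0}" by (auto simp: QS_def suppm_def fun_eq_iff)
    thus ?thesis using g0 by (simp add: t_def)
  qed
  have tD: "\<And>j. j > D \<Longrightarrow> t j = 0"
  proof -
    fix j assume j: "j > D"
    have "\<forall>m\<in>QS D {..<j}. g m = 0"
    proof
      fix m assume m: "m \<in> QS D {..<j}"
      hence s: "suppm m = {..<j}" by (simp add: QS_def)
      have zero: "\<forall>i. j \<le> i \<longrightarrow> m i = 0"
      proof (intro allI impI)
        fix i assume "j \<le> i"
        hence "i \<notin> suppm m" using s by simp
        thus "m i = 0" by (simp add: suppm_def)
      qed
      have "mdeg m = (\<Sum>i<j. m i)" using mdeg_K[OF zero] .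
      also have "\<dots> \<ge> (\<Sum>i<j. 1)"
      proof (rule sum_mono)
        fix i assume "i \<in> {..<j}" hence "i \<in> suppm m" using s by simp
        thus "1 \<le> m i" by (simp add: suppm_def)
      qed
      finally have "mdeg m \<ge> j" by simp
      thus "g m = 0" using bg j by (auto simp: bnd_def)
    qed
    thus "t j = 0" by (simp add: t_def)
  qed
  have Pform: "\<And>N. Pspec g N D = (\<Sum>j\<le>N. of_nat (N choose j) * t j)"
  proof -
    fix N
    have "Pspec g N D = (\<Sum>S\<in>Pow {..<N}. \<Sum>m\<in>{m \<in> Mon N D. suppm m = S}. g m)"
      unfolding Pspec_def
    proof (rule sum.group[symmetric])
      show "finite (Mon N D)" by (rule finite_Mon)
      show "finite (Pow {..<N})" by simp
      show "suppm ` Mon N D \<subseteq> Pow {..<N}"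
      proof
        fix S assume "S \<in> suppm ` Mon N D"
        then obtain m where m: "m \<in> Mon N D" "S = suppm m" by blast
        have "suppm m \<subseteq> {..<N}"
        proof
          fix i assume "i \<in> suppm m"
          hence "m i \<noteq> 0" by (simp add: suppm_def)
          hence "\<not> N \<le> i" using m(1) by (auto simp: Mon_def)
          thus "i \<in> {..<N}" by simp
        qed
        thus "S \<in> Pow {..<N}" using m by simp
      qed
    qed
    also have "\<dots> = (\<Sum>S\<in>Pow {..<N}. t (card S))"
    proof (rule sum.cong[OF refl])
      fix S assume "S \<in> Pow {..<N}"
      hence S: "S \<subseteq> {..<N}" by simp
      hence fS: "finite S" using finite_subset by blast
      have "(\<Sum>m\<in>{m \<in> Mon N D. suppm m = S}. g m) = sum g (QS D S)" using QS_Mon[OF S] by simp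
      also have "\<dots> = t (card S)" unfolding t_def by (rule QS_sym[OF sg fS])
      finally show "(\<Sum>m\<in>{m \<in> Mon N D. suppm m = S}. g m) = t (card S)" .
    qed
    also have "\<dots> = (\<Sum>j\<le>N. of_nat (N choose j) * t j)" by (rule sum_pow_card)
    finally show "Pspec g N D = (\<Sum>j\<le>N. of_nat (N choose j) * t j)" .
  qed
  define p where "p = (\<lambda>k. SOME p. \<forall>x::complex. x gchoose Suc k = x * poly p x)"
  have p: "\<And>k x. (x::complex) gchoose Suc k = x * poly (p k) x"
  proof -
    fix k x
    have "\<exists>q. \<forall>x::complex. x gchoose Suc k = x * poly q x" by (rule gchoose_poly_Suc)
    hence "\<forall>x::complex. x gchoose Suc k = x * poly (p k) x" unfolding p_def by (rule someI_ex)
    thus "(x::complex) gchoose Suc k = x * poly (p k) x" by blast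
  qed
  define r where "r = (\<Sum>k<D. smult (t (Suc k)) (p k))"
  have "\<forall>N. Pspec g N D = of_nat N * poly r (of_nat N)"
  proof
    fix N
    define F where "F = (\<lambda>j. of_nat (N choose j) * t j :: complex)"
    have "(\<Sum>j\<le>N. F j) = (\<Sum>j\<le>N + D. F j)"
      by (rule sum.mono_neutral_left) (auto simp: F_def)
    also have "\<dots> = (\<Sum>j\<le>D. F j)"
      by (rule sum.mono_neutral_right) (auto simp: F_def tD)
    also have "\<dots> = (\<Sum>j<Suc D. F j)" by (simp add: lessThan_Suc_atMost)
    also have "\<dots> = F 0 + (\<Sum>k<D. F (Suc k))" by (rule sum.lessThan_Suc_shift)
    also have "F 0 = 0" by (simp add: F_def t0)
    also have "(\<Sum>k<D. F (Suc k)) = (\<Sum>k<D. of_nat N * (t (Suc k) * poly (p k) (of_nat N)))"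
    proof (rule sum.cong[OF refl])
      fix k
      have "of_nat (N choose Suc k) = (of_nat N gchoose Suc k :: complex)" by (rule binomial_gbinomial)
      also have "\<dots> = of_nat N * poly (p k) (of_nat N)" by (rule p)
      finally show "F (Suc k) = of_nat N * (t (Suc k) * poly (p k) (of_nat N))"
        by (simp add: F_def algebra_simps)
    qed
    also have "\<dots> = of_nat N * poly r (of_nat N)"
      by (simp add: r_def poly_sum sum_distrib_left)
    finally show "Pspec g N D = of_nat N * poly r (of_nat N)" using Pform by (simp add: F_def)
  qed
  thus ?thesis by blast
qed


definition CS :: "'a set \<Rightarrow> ('a \<Rightarrow> 'a \<Rightarrow> bool) \<Rightarrow> monom \<Rightarrow> ('a \<Rightarrow> nat) set" where
  "CS V E m = {\<kappa> \<in> V \<rightarrow>\<^sub>E (UNIV :: nat set). proper_coloring V E \<kappa> \<and> (\<forall>i. m i = card {v\<in>V. \<kappa> v = i})}"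

lemma chrom_CS: "chromatic_symfun V E m = of_nat (card (CS V E m))"
  by (simp add: chromatic_symfun_def CS_def)

lemma cnt_sum:
  assumes fV: "finite V"
  shows "card V = (\<Sum>i\<in>\<kappa> ` V. card {v\<in>V. \<kappa> v = i})"
proof -
  have "card V = (\<Sum>v\<in>V. 1)" by simp
  also have "\<dots> = (\<Sum>i\<in>\<kappa> ` V. \<Sum>v\<in>{v \<in> V. \<kappa> v = i}. 1)" using fV by (rule sum.image_gen)
  also have "\<dots> = (\<Sum>i\<in>\<kappa> ` V. card {v\<in>V. \<kappa> v = i})" by simp
  finally show ?thesis .
qed

lemma cnt_props:
  assumes fV: "finite V"
  shows "fin_supp (\<lambda>i. card {v\<in>V. \<kappa> v = i})" and "mdeg (\<lambda>i. card {v\<in>V. \<kappa> v = i}) = card V"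
proof -
  have sub: "{i. card {v\<in>V. \<kappa> v = i} \<noteq> 0} \<subseteq> \<kappa> ` V"
  proof
    fix i assume "i \<in> {i. card {v\<in>V. \<kappa> v = i} \<noteq> 0}"
    hence "{v\<in>V. \<kappa> v = i} \<noteq> {}" by (metis (mono_tags, lifting) card.empty mem_Collect_eq)
    thus "i \<in> \<kappa> ` V" by blast
  qed
  show "fin_supp (\<lambda>i. card {v\<in>V. \<kappa> v = i})" unfolding fin_supp_def
    using sub fV finite_subset by blast
  show "mdeg (\<lambda>i. card {v\<in>V. \<kappa> v = i}) = card V"
    using mdeg_eq[OF sub] fV cnt_sum[OF fV, of \<kappa>] by simp
qed

lemma CS_mem_cnt: "\<kappa> \<in> CS V E m \<Longrightarrow> m = (\<lambda>i. card {v\<in>V. \<kappa> v = i})"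
  by (auto simp: CS_def)

lemma chrom_bnd:
  assumes fV: "finite V" and nz: "chromatic_symfun V E m \<noteq> 0"
  shows "fin_supp m \<and> mdeg m = card V"
proof -
  have "CS V E m \<noteq> {}" using nz by (auto simp: chrom_CS)
  then obtain \<kappa> where "\<kappa> \<in> CS V E m" by blast
  hence "m = (\<lambda>i. card {v\<in>V. \<kappa> v = i})" by (rule CS_mem_cnt)
  thus ?thesis using cnt_props[OF fV, of \<kappa>] by simp
qed

lemma chrom_perm:
  assumes bij: "bij \<sigma>"
  shows "card (CS V E (m \<circ> \<sigma>)) = card (CS V E m)"
proof -
  have inv1: "\<And>x. \<sigma> (inv \<sigma> x) = x" using bij by (simp add: bij_is_surj surj_f_inv_f)
  have inv2: "\<And>x. inv \<sigma> (\<sigma> x) = x" using bij by (simp add: bij_is_inj inv_f_f)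
  have "bij_betw (\<lambda>\<kappa>. restrict (inv \<sigma> \<circ> \<kappa>) V) (CS V E m) (CS V E (m \<circ> \<sigma>))"
  proof (rule bij_betw_byWitness[where f'="\<lambda>\<kappa>. restrict (\<sigma> \<circ> \<kappa>) V"])
    show "\<forall>\<kappa>\<in>CS V E m. restrict (\<sigma> \<circ> restrict (inv \<sigma> \<circ> \<kappa>) V) V = \<kappa>"
      by (auto simp: CS_def inv1 fun_eq_iff PiE_def extensional_def)
    show "\<forall>\<kappa>\<in>CS V E (m \<circ> \<sigma>). restrict (inv \<sigma> \<circ> restrict (\<sigma> \<circ> \<kappa>) V) V = \<kappa>"
      by (auto simp: CS_def inv2 fun_eq_iff PiE_def extensional_def)
    show "(\<lambda>\<kappa>. restrict (inv \<sigma> \<circ> \<kappa>) V) ` CS V E m \<subseteq> CS V E (m \<circ> \<sigma>)"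
    proof
      fix \<kappa>' assume "\<kappa>' \<in> (\<lambda>\<kappa>. restrict (inv \<sigma> \<circ> \<kappa>) V) ` CS V E m"
      then obtain \<kappa> where k: "\<kappa> \<in> CS V E m" and k': "\<kappa>' = restrict (inv \<sigma> \<circ> \<kappa>) V" by blast
      have pr: "proper_coloring V E \<kappa>" and cn: "\<forall>i. m i = card {v\<in>V. \<kappa> v = i}" using k by (auto simp: CS_def)
      have "proper_coloring V E \<kappa>'" using pr unfolding proper_coloring_def k'
        by (auto, metis inv1)
      moreover have "\<forall>i. (m \<circ> \<sigma>) i = card {v\<in>V. \<kappa>' v = i}"
      proof
        fix i
        have "{v\<in>V. \<kappa>' v = i} = {v\<in>V. \<kappa> v = \<sigma> i}" unfolding k' by (auto, metis inv1, metis inv2)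
        thus "(m \<circ> \<sigma>) i = card {v\<in>V. \<kappa>' v = i}" using cn by simp
      qed
      ultimately show "\<kappa>' \<in> CS V E (m \<circ> \<sigma>)" by (simp add: CS_def k')
    qed
    show "(\<lambda>\<kappa>. restrict (\<sigma> \<circ> \<kappa>) V) ` CS V E (m \<circ> \<sigma>) \<subseteq> CS V E m"
    proof
      fix \<kappa>' assume "\<kappa>' \<in> (\<lambda>\<kappa>. restrict (\<sigma> \<circ> \<kappa>) V) ` CS V E (m \<circ> \<sigma>)"
      then obtain \<kappa> where k: "\<kappa> \<in> CS V E (m \<circ> \<sigma>)" and k': "\<kappa>' = restrict (\<sigma> \<circ> \<kappa>) V" by blast
      have pr: "proper_coloring V E \<kappa>" and cn: "\<forall>i. (m \<circ> \<sigma>) i = card {v\<in>V. \<kappa> v = i}" using k by (auto simp: CS_def)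
      have "proper_coloring V E \<kappa>'" using pr unfolding proper_coloring_def k'
        by (auto, metis inv2)
      moreover have "\<forall>i. m i = card {v\<in>V. \<kappa>' v = i}"
      proof
        fix i
        have "{v\<in>V. \<kappa>' v = i} = {v\<in>V. \<kappa> v = inv \<sigma> i}" unfolding k' by (auto, metis inv2, metis inv1)
        moreover have "m i = (m \<circ> \<sigma>) (inv \<sigma> i)" by (simp add: inv1)
        ultimately show "m i = card {v\<in>V. \<kappa>' v = i}" using cn by simp
      qed
      ultimately show "\<kappa>' \<in> CS V E m" by (simp add: CS_def k')
    qed
  qed
  thus ?thesis by (rule bij_betw_same_card[symmetric])
qed

lemma chrom_sym:
  assumes fV: "finite V"
  shows "sym_fun (chromatic_symfun V E)"
  unfolding sym_fun_def
proof (intro conjI)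
  show "\<forall>m. \<not> fin_supp m \<longrightarrow> chromatic_symfun V E m = 0" using chrom_bnd[OF fV] by blast
  show "\<exists>d. \<forall>m. chromatic_symfun V E m \<noteq> 0 \<longrightarrow> mdeg m \<le> d"
    using chrom_bnd[OF fV] by (intro exI[of _ "card V"]) simp
  show "\<forall>\<sigma> m. bij \<sigma> \<longrightarrow> chromatic_symfun V E (m \<circ> \<sigma>) = chromatic_symfun V E m"
    by (simp add: chrom_CS chrom_perm)
qed

lemma chrom_bnd': "finite V \<Longrightarrow> bnd (chromatic_symfun V E) (card V)"
  using chrom_bnd by (fastforce simp: bnd_def)

lemma card_fiber_pos:
  assumes fV: "finite V" and v: "v \<in> V"
  shows "card {w\<in>V. \<kappa> w = \<kappa> v} \<noteq> 0"
proof -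
  have "v \<in> {w\<in>V. \<kappa> w = \<kappa> v}" using v by simp
  moreover have "finite {w\<in>V. \<kappa> w = \<kappa> v}" using fV by simp
  ultimately show ?thesis by (metis card_0_eq empty_iff)
qed

lemma chrom_zero:
  assumes fV: "finite V" and ne: "V \<noteq> {}"
  shows "chromatic_symfun V E (\<lambda>_. 0) = 0"
proof -
  have "CS V E (\<lambda>_. 0) = {}"
  proof (rule ccontr)
    assume "CS V E (\<lambda>_. 0) \<noteq> {}"
    then obtain \<kappa> where k: "\<kappa> \<in> CS V E (\<lambda>_. 0)" by blast
    obtain v where v: "v \<in> V" using ne by blast
    have "0 = card {w\<in>V. \<kappa> w = \<kappa> v}" using k by (simp add: CS_def)
    thus False using card_fiber_pos[OF fV v, of \<kappa>] by simp
  qed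
  thus ?thesis by (simp add: chrom_CS)
qed

lemma CS_finite:
  assumes fV: "finite V"
  shows "finite (CS V E m)"
proof (cases "CS V E m = {}")
  case True thus ?thesis by simp
next
  case False
  then obtain \<kappa>0 where "\<kappa>0 \<in> CS V E m" by blast
  hence "m = (\<lambda>i. card {v\<in>V. \<kappa>0 v = i})" by (rule CS_mem_cnt)
  hence fm: "finite {i. m i \<noteq> 0}" using cnt_props(1)[OF fV, of \<kappa>0] by (simp add: fin_supp_def)
  have "CS V E m \<subseteq> V \<rightarrow>\<^sub>E {i. m i \<noteq> 0}"
  proof
    fix \<kappa> assume k: "\<kappa> \<in> CS V E m"
    have "\<forall>v\<in>V. m (\<kappa> v) \<noteq> 0"
    proof
      fix v assume v: "v \<in> V"
      have "m (\<kappa> v) = card {w\<in>V. \<kappa> w = \<kappa> v}" using k by (simp add: CS_def)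
      thus "m (\<kappa> v) \<noteq> 0" using card_fiber_pos[OF fV v, of \<kappa>] by simp
    qed
    thus "\<kappa> \<in> V \<rightarrow>\<^sub>E {i. m i \<noteq> 0}" using k
      by (auto simp: CS_def PiE_def Pi_def)
  qed
  moreover have "finite (V \<rightarrow>\<^sub>E {i. m i \<noteq> 0})" using fV fm by (simp add: finite_PiE)
  ultimately show ?thesis using finite_subset by blast
qed


lemma chrom_nonconst:
  assumes fV: "finite V" and ne: "V \<noteq> {}" and irr: "\<forall>v. \<not> E v v"
  shows "\<not> series_const (chromatic_symfun V E)"
proof -
  obtain f where f: "bij_betw f V {0..<card V}" using ex_bij_betw_finite_nat[OF fV] by blast
  define \<kappa> where "\<kappa> = restrict f V"
  define m where "m = (\<lambda>i. card {v\<in>V. \<kappa> v = i})"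
  have inj: "inj_on \<kappa> V" using f by (simp add: \<kappa>_def bij_betw_def inj_on_def)
  have "proper_coloring V E \<kappa>" unfolding proper_coloring_def
  proof (intro ballI impI)
    fix u v assume u: "u \<in> V" and v: "v \<in> V" and e: "E u v"
    have "u \<noteq> v" using e irr by blast
    thus "\<kappa> u \<noteq> \<kappa> v" using inj u v by (meson inj_on_contraD)
  qed
  hence "\<kappa> \<in> CS V E m" by (simp add: CS_def m_def \<kappa>_def)
  hence "CS V E m \<noteq> {}" by blast
  hence "card (CS V E m) \<noteq> 0" using CS_finite[OF fV] by simp
  hence nz: "chromatic_symfun V E m \<noteq> 0" by (simp add: chrom_CS)
  have "mdeg m = card V" unfolding m_def by (rule cnt_props(2)[OF fV])
  moreover have "card V > 0" using fV ne by (simp add: card_gt_0_iff)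
  moreover have "mdeg (\<lambda>_::nat. 0::nat) = 0" by (simp add: mdeg_def)
  ultimately have "m \<noteq> (\<lambda>_. 0)" by auto
  thus ?thesis using nz unfolding series_const_def by blast
qed

lemma chrom_spec:
  assumes fV: "finite V" and D: "card V \<le> D"
  shows "Pspec (chromatic_symfun V E) N D = of_nat (card {\<kappa> \<in> V \<rightarrow>\<^sub>E {..<N}. proper_coloring V E \<kappa>})"
proof -
  let ?R = "{\<kappa> \<in> V \<rightarrow>\<^sub>E {..<N}. proper_coloring V E \<kappa>}"
  have "Pspec (chromatic_symfun V E) N D = of_nat (\<Sum>m\<in>Mon N D. card (CS V E m))"
    by (simp add: Pspec_def chrom_CS)
  also have "(\<Sum>m\<in>Mon N D. card (CS V E m)) = card (\<Union>m\<in>Mon N D. CS V E m)"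
  proof (rule card_UN_disjoint[symmetric])
    show "finite (Mon N D)" by (rule finite_Mon)
    show "\<forall>m\<in>Mon N D. finite (CS V E m)" using CS_finite[OF fV] by blast
    show "\<forall>m\<in>Mon N D. \<forall>m'\<in>Mon N D. m \<noteq> m' \<longrightarrow> CS V E m \<inter> CS V E m' = {}"
    proof (intro ballI impI)
      fix m m' assume "m \<in> Mon N D" "m' \<in> Mon N D" "m \<noteq> m'"
      show "CS V E m \<inter> CS V E m' = {}"
      proof (rule equals0I)
        fix \<kappa> assume "\<kappa> \<in> CS V E m \<inter> CS V E m'"
        hence "m = (\<lambda>i. card {v\<in>V. \<kappa> v = i})" "m' = (\<lambda>i. card {v\<in>V. \<kappa> v = i})"
          using CS_mem_cnt by (blast, blast)
        thus False using \<open>m \<noteq> m'\<close> by simp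
      qed
    qed
  qed
  also have "(\<Union>m\<in>Mon N D. CS V E m) = ?R"
  proof (intro set_eqI iffI)
    fix \<kappa> assume "\<kappa> \<in> (\<Union>m\<in>Mon N D. CS V E m)"
    then obtain m where m: "m \<in> Mon N D" and k: "\<kappa> \<in> CS V E m" by blast
    have "\<forall>v\<in>V. \<kappa> v < N"
    proof
      fix v assume v: "v \<in> V"
      have "m (\<kappa> v) = card {w\<in>V. \<kappa> w = \<kappa> v}" using k by (simp add: CS_def)
      hence "m (\<kappa> v) \<noteq> 0" using card_fiber_pos[OF fV v, of \<kappa>] by simp
      have "\<not> N \<le> \<kappa> v"
      proof
        assume "N \<le> \<kappa> v" hence "m (\<kappa> v) = 0" using m by (simp add: Mon_def)
        thus False using \<open>m (\<kappa> v) \<noteq> 0\<close> by simp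
      qed
      thus "\<kappa> v < N" by simp
    qed
    thus "\<kappa> \<in> ?R" using k by (auto simp: CS_def PiE_def Pi_def)
  next
    fix \<kappa> assume k: "\<kappa> \<in> ?R"
    define m where "m = (\<lambda>i. card {v\<in>V. \<kappa> v = i})"
    have "\<forall>i. N \<le> i \<longrightarrow> m i = 0"
    proof (intro allI impI)
      fix i assume "N \<le> i"
      hence "{v\<in>V. \<kappa> v = i} = {}" using k by (auto simp: PiE_def Pi_def)
      thus "m i = 0" unfolding m_def by (metis card.empty)
    qed
    moreover have "\<forall>i. m i \<le> D"
    proof
      fix i have "m i \<le> card V" unfolding m_def using fV by (intro card_mono) auto
      thus "m i \<le> D" using D by linarith
    qed
    ultimately have "m \<in> Mon N D" by (simp add: Mon_def)
    moreover have "\<kappa> \<in> CS V E m" using k by (auto simp: CS_def m_def PiE_def Pi_def)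
    ultimately show "\<kappa> \<in> (\<Union>m\<in>Mon N D. CS V E m)" by blast
  qed
  finally show ?thesis .
qed

lemma chrom_prod:
  assumes fV: "finite V" and V: "V = V1 \<union> V2" and dj: "V1 \<inter> V2 = {}"
    and noE: "\<And>u v. u \<in> V1 \<Longrightarrow> v \<in> V2 \<Longrightarrow> \<not> E u v \<and> \<not> E v u"
  shows "chromatic_symfun V E = series_mult (chromatic_symfun V1 E) (chromatic_symfun V2 E)"
proof
  fix m :: monom
  have fV1: "finite V1" and fV2: "finite V2" using fV V by auto
  let ?L = "{a. \<forall>i. a i \<le> m i}"
  show "chromatic_symfun V E m = series_mult (chromatic_symfun V1 E) (chromatic_symfun V2 E) m"
  proof (cases "fin_supp m")
    case False
    have "chromatic_symfun V E m = 0" using chrom_bnd[OF fV] False by blast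
    moreover have "series_mult (chromatic_symfun V1 E) (chromatic_symfun V2 E) m = 0"
      unfolding series_mult_def
    proof (rule sum.neutral, rule ballI)
      fix a assume a: "a \<in> ?L"
      show "chromatic_symfun V1 E a * chromatic_symfun V2 E (\<lambda>i. m i - a i) = 0"
      proof (rule ccontr)
        assume "chromatic_symfun V1 E a * chromatic_symfun V2 E (\<lambda>i. m i - a i) \<noteq> 0"
        hence "fin_supp a" "fin_supp (\<lambda>i. m i - a i)" using chrom_bnd[OF fV1] chrom_bnd[OF fV2] by auto
        hence "fin_supp (\<lambda>i. a i + (m i - a i))" unfolding fin_supp_def
          by (rule finite_subset[rotated, OF finite_UnI]) auto
        moreover have "(\<lambda>i. a i + (m i - a i)) = m" using minus_decomp[of a m] a by simp
        ultimately show False using False by simp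
      qed
    qed
    ultimately show ?thesis by simp
  next
    case True
    define c1 where "c1 = (\<lambda>\<kappa>::'a\<Rightarrow>nat. (\<lambda>i. card {v\<in>V1. \<kappa> v = i}))"
    have "card (CS V E m) = (\<Sum>a\<in>?L. card {\<kappa> \<in> CS V E m. c1 \<kappa> = a})"
    proof -
      have "card (CS V E m) = (\<Sum>\<kappa>\<in>CS V E m. 1)" by simp
      also have "\<dots> = (\<Sum>a\<in>?L. \<Sum>\<kappa>\<in>{\<kappa> \<in> CS V E m. c1 \<kappa> = a}. 1)"
      proof (rule sum.group[symmetric])
        show "finite (CS V E m)" by (rule CS_finite[OF fV])
        show "finite ?L" by (rule finite_le[OF True])
        show "c1 ` CS V E m \<subseteq> ?L"
        proof
          fix a assume "a \<in> c1 ` CS V E m"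
          then obtain \<kappa> where k: "\<kappa> \<in> CS V E m" and a: "a = c1 \<kappa>" by blast
          have "\<forall>i. a i \<le> m i"
          proof
            fix i
            have "m i = card {v\<in>V. \<kappa> v = i}" using k by (simp add: CS_def)
            moreover have "card {v\<in>V1. \<kappa> v = i} \<le> card {v\<in>V. \<kappa> v = i}"
              using fV V by (intro card_mono) auto
            ultimately show "a i \<le> m i" by (simp add: a c1_def)
          qed
          thus "a \<in> ?L" by simp
        qed
      qed
      finally show ?thesis by simp
    qed
    also have "\<dots> = (\<Sum>a\<in>?L. card (CS V1 E a) * card (CS V2 E (\<lambda>i. m i - a i)))"
    proof (rule sum.cong[OF refl])
      fix a assume a: "a \<in> ?L"
      have am: "\<forall>i. a i \<le> m i" using a by simp
      define mg where "mg = (\<lambda>(\<kappa>1::'a\<Rightarrow>nat, \<kappa>2::'a\<Rightarrow>nat). (\<lambda>v. if v \<in> V1 then \<kappa>1 v else \<kappa>2 v))"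
      have split: "\<And>\<kappa> (i::nat). card {v\<in>V. \<kappa> v = i} = card {v\<in>V1. \<kappa> v = i} + card {v\<in>V2. \<kappa> v = i}"
      proof -
        fix \<kappa> :: "'a \<Rightarrow> nat" and i :: nat
        have "{v\<in>V. \<kappa> v = i} = {v\<in>V1. \<kappa> v = i} \<union> {v\<in>V2. \<kappa> v = i}" using V by auto
        thus "card {v\<in>V. \<kappa> v = i} = card {v\<in>V1. \<kappa> v = i} + card {v\<in>V2. \<kappa> v = i}"
          using fV1 fV2 dj by (simp add: card_Un_disjoint disjoint_iff)
      qed
      have "bij_betw (\<lambda>\<kappa>. (restrict \<kappa> V1, restrict \<kappa> V2)) {\<kappa> \<in> CS V E m. c1 \<kappa> = a}
              (CS V1 E a \<times> CS V2 E (\<lambda>i. m i - a i))"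
      proof (rule bij_betw_byWitness[where f'=mg])
        show "\<forall>\<kappa>\<in>{\<kappa> \<in> CS V E m. c1 \<kappa> = a}. mg (restrict \<kappa> V1, restrict \<kappa> V2) = \<kappa>"
          using V by (auto simp: mg_def CS_def PiE_def extensional_def fun_eq_iff)
        show "\<forall>p\<in>CS V1 E a \<times> CS V2 E (\<lambda>i. m i - a i). (restrict (mg p) V1, restrict (mg p) V2) = p"
          using dj by (auto simp: mg_def CS_def PiE_def extensional_def fun_eq_iff)
        show "(\<lambda>\<kappa>. (restrict \<kappa> V1, restrict \<kappa> V2)) ` {\<kappa> \<in> CS V E m. c1 \<kappa> = a} \<subseteq> CS V1 E a \<times> CS V2 E (\<lambda>i. m i - a i)"
        proof
          fix p assume "p \<in> (\<lambda>\<kappa>. (restrict \<kappa> V1, restrict \<kappa> V2)) ` {\<kappa> \<in> CS V E m. c1 \<kappa> = a}"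
          then obtain \<kappa> where k: "\<kappa> \<in> CS V E m" "c1 \<kappa> = a" and p: "p = (restrict \<kappa> V1, restrict \<kappa> V2)" by blast
          have pr: "proper_coloring V E \<kappa>" and cn: "\<forall>i. m i = card {v\<in>V. \<kappa> v = i}" using k by (auto simp: CS_def)
          have e1: "\<And>i. card {v\<in>V1. restrict \<kappa> V1 v = i} = card {v\<in>V1. \<kappa> v = i}"
            by (rule arg_cong[where f=card]) auto
          have e2: "\<And>i. card {v\<in>V2. restrict \<kappa> V2 v = i} = card {v\<in>V2. \<kappa> v = i}"
            by (rule arg_cong[where f=card]) auto
          have ai: "\<And>i. a i = card {v\<in>V1. \<kappa> v = i}" using k(2) by (auto simp: c1_def)
          have "\<forall>i. a i = card {v\<in>V1. restrict \<kappa> V1 v = i}"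
          proof
            fix i show "a i = card {v\<in>V1. restrict \<kappa> V1 v = i}" by (simp only: e1 ai)
          qed
          moreover have "proper_coloring V1 E (restrict \<kappa> V1)"
            using pr V unfolding proper_coloring_def by auto
          ultimately have "restrict \<kappa> V1 \<in> CS V1 E a" unfolding CS_def by simp
          moreover have "restrict \<kappa> V2 \<in> CS V2 E (\<lambda>i. m i - a i)"
          proof -
            have "\<forall>i. m i - a i = card {v\<in>V2. restrict \<kappa> V2 v = i}"
            proof
              fix i
              have "m i = card {v\<in>V1. \<kappa> v = i} + card {v\<in>V2. \<kappa> v = i}"
                using cn split[of \<kappa> i] by simp
              hence "m i - a i = card {v\<in>V2. \<kappa> v = i}" using ai[of i] by simp
              thus "m i - a i = card {v\<in>V2. restrict \<kappa> V2 v = i}" by (simp only: e2)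
            qed
            moreover have "proper_coloring V2 E (restrict \<kappa> V2)"
              using pr V unfolding proper_coloring_def by auto
            ultimately show ?thesis unfolding CS_def by simp
          qed
          ultimately show "p \<in> CS V1 E a \<times> CS V2 E (\<lambda>i. m i - a i)" using p by simp
        qed
        show "mg ` (CS V1 E a \<times> CS V2 E (\<lambda>i. m i - a i)) \<subseteq> {\<kappa> \<in> CS V E m. c1 \<kappa> = a}"
        proof
          fix \<kappa> assume "\<kappa> \<in> mg ` (CS V1 E a \<times> CS V2 E (\<lambda>i. m i - a i))"
          then obtain \<kappa>1 \<kappa>2 where k1: "\<kappa>1 \<in> CS V1 E a" and k2: "\<kappa>2 \<in> CS V2 E (\<lambda>i. m i - a i)"
            and k: "\<kappa> = mg (\<kappa>1, \<kappa>2)" by blast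
          have k1': "\<kappa>1 \<in> V1 \<rightarrow>\<^sub>E UNIV" "proper_coloring V1 E \<kappa>1" "\<forall>i. a i = card {v\<in>V1. \<kappa>1 v = i}"
            using k1 by (auto simp: CS_def)
          have k2': "\<kappa>2 \<in> V2 \<rightarrow>\<^sub>E UNIV" "proper_coloring V2 E \<kappa>2" "\<forall>i. m i - a i = card {v\<in>V2. \<kappa>2 v = i}"
            using k2 by (auto simp: CS_def)
          have kv: "\<And>v. \<kappa> v = (if v \<in> V1 then \<kappa>1 v else \<kappa>2 v)" by (simp add: k mg_def)
          have "\<kappa> \<in> V \<rightarrow>\<^sub>E UNIV" using k1'(1) k2'(1) V by (auto simp: kv PiE_def extensional_def)
          moreover have "proper_coloring V E \<kappa>"
            unfolding proper_coloring_def
          proof (intro ballI impI)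
            fix u v assume u: "u \<in> V" and v: "v \<in> V" and e: "E u v"
            show "\<kappa> u \<noteq> \<kappa> v"
            proof (cases "u \<in> V1")
              case True
              hence "v \<in> V1" using noE e v V by blast
              thus ?thesis using True k1'(2) e by (simp add: kv proper_coloring_def)
            next
              case False
              hence u2: "u \<in> V2" using u V by blast
              hence "v \<notin> V1" using noE e by blast
              hence "v \<in> V2" using v V by blast
              thus ?thesis using False u2 \<open>v \<notin> V1\<close> k2'(2) e by (simp add: kv proper_coloring_def)
            qed
          qed
          moreover have c1k: "\<And>i. card {v\<in>V1. \<kappa> v = i} = a i"
          proof -
            fix i
            have "{v\<in>V1. \<kappa> v = i} = {v\<in>V1. \<kappa>1 v = i}" by (auto simp: kv)
            thus "card {v\<in>V1. \<kappa> v = i} = a i" using k1'(3) by simp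
          qed
          moreover have "\<forall>i. m i = card {v\<in>V. \<kappa> v = i}"
          proof
            fix i
            have "{v\<in>V2. \<kappa> v = i} = {v\<in>V2. \<kappa>2 v = i}" using dj by (auto simp: kv)
            hence "card {v\<in>V2. \<kappa> v = i} = m i - a i" using k2'(3) by simp
            moreover have "a i \<le> m i" using am by blast
            ultimately show "m i = card {v\<in>V. \<kappa> v = i}" using split[of \<kappa> i] c1k[of i] by simp
          qed
          ultimately show "\<kappa> \<in> {\<kappa> \<in> CS V E m. c1 \<kappa> = a}" by (simp add: CS_def c1_def fun_eq_iff)
        qed
      qed
      hence "card {\<kappa> \<in> CS V E m. c1 \<kappa> = a} = card (CS V1 E a \<times> CS V2 E (\<lambda>i. m i - a i))"
        by (rule bij_betw_same_card)
      thus "card {\<kappa> \<in> CS V E m. c1 \<kappa> = a} = card (CS V1 E a) * card (CS V2 E (\<lambda>i. m i - a i))"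
        by (simp add: card_cartesian_product)
    qed
    finally show ?thesis
      by (simp add: chrom_CS series_mult_def)
  qed
qed


definition EW :: "('a \<Rightarrow> 'a \<Rightarrow> bool) \<Rightarrow> 'a set \<Rightarrow> 'a \<Rightarrow> 'a \<Rightarrow> bool" where
  "EW E W = (\<lambda>x y. E x y \<and> x \<in> W \<and> y \<in> W)"

definition connW :: "('a \<Rightarrow> 'a \<Rightarrow> bool) \<Rightarrow> 'a set \<Rightarrow> bool" where
  "connW E W \<longleftrightarrow> (\<forall>u\<in>W. \<forall>v\<in>W. (EW E W)\<^sup>*\<^sup>* u v)"

definition pathW :: "('a \<Rightarrow> 'a \<Rightarrow> bool) \<Rightarrow> 'a set \<Rightarrow> 'a list \<Rightarrow> bool" where
  "pathW E W xs \<longleftrightarrow> distinct xs \<and> set xs \<subseteq> W \<and> xs \<noteq> [] \<and> (\<forall>i. Suc i < length xs \<longrightarrow> E (xs!i) (xs!Suc i))"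

lemma ex_edge:
  assumes c: "connW E W" and u: "u \<in> W" and v: "v \<in> W" and uv: "u \<noteq> v"
  shows "\<exists>y. E u y \<and> y \<in> W"
proof -
  have "(EW E W)\<^sup>*\<^sup>* u v" using c u v by (simp add: connW_def)
  thus ?thesis
  proof (cases rule: converse_rtranclpE)
    case base thus ?thesis using uv by simp
  next
    case (step y) thus ?thesis by (auto simp: EW_def)
  qed
qed

lemma leaf_exists:
  assumes fW: "finite W" and c2: "card W \<ge> 2" and c: "connW E W" and ac: "\<nexists>cs. is_cycle W E cs"
    and sym: "\<forall>u v. E u v \<longrightarrow> E v u" and irr: "\<forall>v. \<not> E v v"
  shows "\<exists>l p. l \<in> W \<and> p \<in> W \<and> E l p \<and> (\<forall>x\<in>W. E l x \<longrightarrow> x = p)"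
proof -
  obtain u v where u: "u \<in> W" and v: "v \<in> W" and uv: "u \<noteq> v"
  proof -
    have "\<not> card W \<le> 1" using c2 by simp
    hence "\<exists>u\<in>W. \<exists>v\<in>W. u \<noteq> v" using card_le_Suc0_iff_eq[OF fW] by auto
    thus ?thesis using that by blast
  qed
  obtain y where y: "E u y" "y \<in> W" using ex_edge[OF c u v uv] by blast
  let ?P = "{xs. pathW E W xs}"
  have "?P \<subseteq> {xs. set xs \<subseteq> W \<and> length xs \<le> card W}"
  proof
    fix xs assume "xs \<in> ?P"
    hence d: "distinct xs" and s: "set xs \<subseteq> W" by (auto simp: pathW_def)
    have "length xs = card (set xs)" using distinct_card[OF d] by simp
    also have "\<dots> \<le> card W" using s fW by (rule card_mono[rotated])
    finally show "xs \<in> {xs. set xs \<subseteq> W \<and> length xs \<le> card W}" using s by simp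
  qed
  hence finP: "finite ?P" using finite_lists_length_le[OF fW] finite_subset by blast
  have uy: "[u, y] \<in> ?P" using y u irr by (auto simp: pathW_def less_Suc_eq)
  have "Max (length ` ?P) \<in> length ` ?P" using finP uy by (intro Max_in) auto
  then obtain xs where xsP: "xs \<in> ?P" and xsmax: "length xs = Max (length ` ?P)" by auto
  have maxle: "\<And>ys. ys \<in> ?P \<Longrightarrow> length ys \<le> length xs" using finP xsmax by simp
  have len2: "length xs \<ge> 2" using maxle[OF uy] by simp
  have d: "distinct xs" and s: "set xs \<subseteq> W" and adj: "\<forall>i. Suc i < length xs \<longrightarrow> E (xs!i) (xs!Suc i)"
    using xsP by (auto simp: pathW_def)
  define n where "n = length xs"
  define l where "l = xs ! (n - 1)"
  define p where "p = xs ! (n - 2)"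
  have lW: "l \<in> W" using s len2 by (auto simp: l_def n_def)
  have pW: "p \<in> W" using s len2 by (auto simp: p_def n_def)
  have "E p l" using adj[rule_format, of "n - 2"] len2 by (simp add: p_def l_def n_def Suc_diff_Suc numeral_2_eq_2)
  hence Elp: "E l p" using sym by blast
  have xsne: "xs \<noteq> []" using len2 by auto
  have lastl: "last xs = l" using last_conv_nth[OF xsne] by (simp add: l_def n_def)
  have "\<forall>x\<in>W. E l x \<longrightarrow> x = p"
  proof (intro ballI impI)
    fix x assume xW: "x \<in> W" and Elx: "E l x"
    show "x = p"
    proof (cases "x \<in> set xs")
      case False
      have "pathW E W (xs @ [x])"
        unfolding pathW_def
      proof (intro conjI allI impI)
        show "distinct (xs @ [x])" using d False by simp
        show "set (xs @ [x]) \<subseteq> W" using s xW by simp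
        show "xs @ [x] \<noteq> []" by simp
        fix i assume i: "Suc i < length (xs @ [x])"
        show "E ((xs @ [x]) ! i) ((xs @ [x]) ! Suc i)"
        proof (cases "Suc i < length xs")
          case True thus ?thesis using adj by (simp add: nth_append)
        next
          case False
          hence "i = n - 1" using i by (simp add: n_def)
          hence i1: "i < length xs" and i2: "Suc i = length xs" using len2 by (simp_all add: n_def)
          have "(xs @ [x]) ! i = l" using i1 \<open>i = n - 1\<close> by (simp add: nth_append l_def)
          moreover have "(xs @ [x]) ! Suc i = x" using i2 by (simp add: nth_append)
          ultimately show ?thesis using Elx by simp
        qed
      qed
      hence "length (xs @ [x]) \<le> length xs" by (intro maxle) simp
      thus ?thesis by simp
    next
      case True
      then obtain j where j: "j < n" "xs ! j = x" by (auto simp: in_set_conv_nth n_def)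
      show ?thesis
      proof (cases "j = n - 1")
        case True
        hence "x = l" using j by (simp add: l_def)
        thus ?thesis using Elx irr by blast
      next
        case nl: False
        show ?thesis
        proof (cases "j = n - 2")
          case True thus ?thesis using j by (simp add: p_def)
        next
          case False
          hence jlt: "j + 3 \<le> n" using nl j len2 by (simp add: n_def)
          define cs where "cs = drop j xs"
          have jle: "j \<le> length xs" using j by (simp add: n_def)
          have "is_cycle W E cs" unfolding is_cycle_def
          proof (intro conjI allI impI)
            show "3 \<le> length cs" using jlt by (simp add: cs_def n_def)
            show "distinct cs" using d by (simp add: cs_def)
            show "set cs \<subseteq> W" using s set_drop_subset[of j xs] by (simp add: cs_def)
            fix i assume "Suc i < length cs"
            hence "Suc (j + i) < length xs" by (simp add: cs_def)
            thus "E (cs ! i) (cs ! Suc i)" using adj jle by (simp add: cs_def)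
          next
            have "last cs = l" using j lastl by (simp add: cs_def n_def)
            moreover have "hd cs = x" using j by (simp add: cs_def n_def hd_drop_conv_nth)
            ultimately show "E (last cs) (hd cs)" using Elx by simp
          qed
          thus ?thesis using ac by blast
        qed
      qed
    qed
  qed
  thus ?thesis using lW pW Elp by blast
qed

lemma conn_remove_leaf:
  assumes c: "connW E W" and lW: "l \<in> W" and pW: "p \<in> W" and plne: "p \<noteq> l"
    and leaf: "\<forall>x\<in>W. E l x \<longrightarrow> x = p"
    and sym: "\<forall>u v. E u v \<longrightarrow> E v u" and irr: "\<forall>v. \<not> E v v"
  shows "connW E (W - {l})"
  unfolding connW_def
proof (intro ballI)
  fix u v assume u: "u \<in> W - {l}" and v: "v \<in> W - {l}"
  have key: "(EW E W)\<^sup>*\<^sup>* u y \<Longrightarrow> (y = l \<longrightarrow> (EW E (W - {l}))\<^sup>*\<^sup>* u p) \<and> (y \<noteq> l \<longrightarrow> (EW E (W - {l}))\<^sup>*\<^sup>* u y)" for y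
  proof (induction rule: rtranclp_induct)
    case base thus ?case using u by simp
  next
    case (step y z)
    have yz: "E y z" "y \<in> W" "z \<in> W" using step.hyps(2) by (auto simp: EW_def)
    show ?case
    proof (intro conjI impI)
      assume zl: "z = l"
      hence "E l y" using yz sym by blast
      hence yp: "y = p" using leaf yz by blast
      hence "y \<noteq> l" using plne by simp
      thus "(EW E (W - {l}))\<^sup>*\<^sup>* u p" using step.IH yp by blast
    next
      assume zl: "z \<noteq> l"
      show "(EW E (W - {l}))\<^sup>*\<^sup>* u z"
      proof (cases "y = l")
        case True
        hence "z = p" using leaf yz by blast
        thus ?thesis using step.IH True by blast
      next
        case False
        hence "(EW E (W - {l}))\<^sup>*\<^sup>* u y" using step.IH by blast
        moreover have "EW E (W - {l}) y z" using yz False zl by (simp add: EW_def)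
        ultimately show ?thesis by (rule rtranclp.rtrancl_into_rtrancl)
      qed
    qed
  qed
  have "(EW E W)\<^sup>*\<^sup>* u v" using c u v by (simp add: connW_def)
  thus "(EW E (W - {l}))\<^sup>*\<^sup>* u v" using key v by blast
qed

lemma acyc_sub: "\<nexists>cs. is_cycle W E cs \<Longrightarrow> W' \<subseteq> W \<Longrightarrow> \<nexists>cs. is_cycle W' E cs"
  unfolding is_cycle_def by blast

lemma tree_count:
  assumes "finite W" "W \<noteq> {}" "connW E W" "\<nexists>cs. is_cycle W E cs"
    and sym: "\<forall>u v. E u v \<longrightarrow> E v u" and irr: "\<forall>v. \<not> E v v"
  shows "card {\<kappa> \<in> W \<rightarrow>\<^sub>E {..<N}. proper_coloring W E \<kappa>} = N * (N - 1) ^ (card W - 1)"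
  using assms(1-4)
proof (induction "card W" arbitrary: W rule: less_induct)
  case less
  note fW = less.prems(1) and ne = less.prems(2) and c = less.prems(3) and ac = less.prems(4)
  show ?case
  proof (cases "card W \<ge> 2")
    case False
    hence "card W = 1" using fW ne by (simp add: card_gt_0_iff) (metis One_nat_def Suc_1 card_0_eq less_2_cases not_less)
    then obtain w where W: "W = {w}" using card_1_singletonE by blast
    have "{\<kappa> \<in> W \<rightarrow>\<^sub>E {..<N}. proper_coloring W E \<kappa>} = W \<rightarrow>\<^sub>E {..<N}"
      using irr by (auto simp: W proper_coloring_def)
    thus ?thesis using W by (simp add: card_PiE)
  next
    case True
    obtain l p where lW: "l \<in> W" and pW: "p \<in> W" and Elp: "E l p" and leaf: "\<forall>x\<in>W. E l x \<longrightarrow> x = p"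
      using leaf_exists[OF fW True c ac sym irr] by blast
    have plne: "p \<noteq> l" using Elp irr by blast
    define W' where "W' = W - {l}"
    have fW': "finite W'" using fW by (simp add: W'_def)
    have cW': "card W' = card W - 1" using lW fW by (simp add: W'_def)
    have neW': "W' \<noteq> {}" using pW plne by (auto simp: W'_def)
    have pW': "p \<in> W'" using pW plne by (simp add: W'_def)
    have conW': "connW E W'" unfolding W'_def by (rule conn_remove_leaf[OF c lW pW plne leaf sym irr])
    have acW': "\<nexists>cs. is_cycle W' E cs" using acyc_sub[OF ac] by (simp add: W'_def)
    let ?A = "{\<kappa> \<in> W' \<rightarrow>\<^sub>E {..<N}. proper_coloring W' E \<kappa>}"
    let ?B = "{\<kappa> \<in> W \<rightarrow>\<^sub>E {..<N}. proper_coloring W E \<kappa>}"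
    have IH: "card ?A = N * (N - 1) ^ (card W' - 1)"
      using less.hyps[of W'] cW' True fW' neW' conW' acW' by simp
    have "bij_betw (\<lambda>\<kappa>. (restrict \<kappa> W', \<kappa> l)) ?B (SIGMA \<kappa>':?A. {..<N} - {\<kappa>' p})"
    proof (rule bij_betw_byWitness[where f'="\<lambda>(\<kappa>', c). \<kappa>'(l := c)"])
      show "\<forall>\<kappa>\<in>?B. (\<lambda>(\<kappa>', c). \<kappa>'(l := c)) (restrict \<kappa> W', \<kappa> l) = \<kappa>"
        by (auto simp: W'_def PiE_def extensional_def fun_eq_iff)
      show "\<forall>q\<in>(SIGMA \<kappa>':?A. {..<N} - {\<kappa>' p}). (\<lambda>\<kappa>. (restrict \<kappa> W', \<kappa> l)) ((\<lambda>(\<kappa>', c). \<kappa>'(l := c)) q) = q"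
        by (auto simp: W'_def PiE_def extensional_def fun_eq_iff)
      show "(\<lambda>\<kappa>. (restrict \<kappa> W', \<kappa> l)) ` ?B \<subseteq> (SIGMA \<kappa>':?A. {..<N} - {\<kappa>' p})"
      proof
        fix q assume "q \<in> (\<lambda>\<kappa>. (restrict \<kappa> W', \<kappa> l)) ` ?B"
        then obtain \<kappa> where kB: "\<kappa> \<in> ?B" and q: "q = (restrict \<kappa> W', \<kappa> l)" by blast
        have k1: "\<kappa> \<in> W \<rightarrow>\<^sub>E {..<N}" and pr: "proper_coloring W E \<kappa>" using kB by auto
        have "restrict \<kappa> W' \<in> W' \<rightarrow>\<^sub>E {..<N}" using k1 by (auto simp: W'_def)
        moreover have "proper_coloring W' E (restrict \<kappa> W')"
          using pr by (auto simp: proper_coloring_def W'_def)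
        moreover have "\<kappa> l < N" using k1 lW by auto
        moreover have "\<kappa> l \<noteq> \<kappa> p" using pr lW pW Elp by (auto simp: proper_coloring_def)
        ultimately show "q \<in> (SIGMA \<kappa>':?A. {..<N} - {\<kappa>' p})" using q pW' by simp
      qed
      show "(\<lambda>(\<kappa>', c). \<kappa>'(l := c)) ` (SIGMA \<kappa>':?A. {..<N} - {\<kappa>' p}) \<subseteq> ?B"
      proof
        fix \<kappa> assume "\<kappa> \<in> (\<lambda>(\<kappa>', c). \<kappa>'(l := c)) ` (SIGMA \<kappa>':?A. {..<N} - {\<kappa>' p})"
        then obtain q where qS: "q \<in> (SIGMA \<kappa>':?A. {..<N} - {\<kappa>' p})" and kq: "\<kappa> = (\<lambda>(\<kappa>', c). \<kappa>'(l := c)) q"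
          by (rule imageE)
        obtain \<kappa>' c where qq: "q = (\<kappa>', c)" by (cases q)
        have kA: "\<kappa>' \<in> ?A" and cN: "c < N" and cp: "c \<noteq> \<kappa>' p" using qS qq by auto
        have k: "\<kappa> = \<kappa>'(l := c)" using kq qq by simp
        have k1: "\<kappa>' \<in> W' \<rightarrow>\<^sub>E {..<N}" and pr: "proper_coloring W' E \<kappa>'" using kA by auto
        have "\<kappa> \<in> W \<rightarrow>\<^sub>E {..<N}" using k1 cN lW by (auto simp: k W'_def PiE_def Pi_def extensional_def)
        moreover have "proper_coloring W E \<kappa>"
          unfolding proper_coloring_def
        proof (intro ballI impI)
          fix x y assume x: "x \<in> W" and y: "y \<in> W" and e: "E x y"
          show "\<kappa> x \<noteq> \<kappa> y"
          proof (cases "x = l")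
            case True
            hence "y = p" using leaf e y by blast
            thus ?thesis using True plne cp by (simp add: k)
          next
            case xl: False
            show ?thesis
            proof (cases "y = l")
              case True
              hence "E l x" using e sym by blast
              hence "x = p" using leaf x by blast
              thus ?thesis using True plne cp by (simp add: k)
            next
              case False
              thus ?thesis using xl pr e x y by (simp add: k proper_coloring_def W'_def)
            qed
          qed
        qed
        ultimately show "\<kappa> \<in> ?B" by simp
      qed
    qed
    hence "card ?B = card (SIGMA \<kappa>':?A. {..<N} - {\<kappa>' p})" by (rule bij_betw_same_card)
    also have "\<dots> = (\<Sum>\<kappa>'\<in>?A. card ({..<N} - {\<kappa>' p}))"
    proof (rule card_SigmaI)
      show "finite ?A" using fW' by (simp add: finite_PiE)
      show "\<forall>a\<in>?A. finite ({..<N} - {a p})" by simp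
    qed
    also have "\<dots> = (\<Sum>\<kappa>'\<in>?A. N - 1)"
    proof (rule sum.cong[OF refl])
      fix \<kappa>' assume "\<kappa>' \<in> ?A"
      hence "\<kappa>' p < N" using pW' by auto
      thus "card ({..<N} - {\<kappa>' p}) = N - 1" by simp
    qed
    also have "\<dots> = card ?A * (N - 1)" by simp
    also have "\<dots> = N * (N - 1) ^ (card W - 1)"
    proof -
      obtain k where kk: "card W = Suc (Suc k)" using True by (metis add_2_eq_Suc le_Suc_ex)
      have "card ?A = N * (N - 1) ^ k" using IH cW' kk by simp
      thus ?thesis using kk by (simp add: power_Suc2 mult.assoc)
    qed
    finally show ?thesis .
  qed
qed


lemma sym_bnd: "sym_fun f \<Longrightarrow> \<exists>D. bnd f D"
  unfolding sym_fun_def bnd_def by blast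

lemma bnd_mono: "bnd f D \<Longrightarrow> D \<le> D' \<Longrightarrow> bnd f D'"
  unfolding bnd_def by fastforce

theorem mainTheorem5:
  fixes V :: "'a set" and E :: "'a \<Rightarrow> 'a \<Rightarrow> bool"
  assumes "forest V E" and "V \<noteq> {}"
  shows "tree V E \<longleftrightarrow> irreducible_Lambda (chromatic_symfun V E)"
proof -
  have sg: "simple_graph V E" and ac: "\<nexists>cs. is_cycle V E cs" using assms(1) by (auto simp: forest_def)
  have fV: "finite V" and inV: "\<forall>u v. E u v \<longrightarrow> u \<in> V \<and> v \<in> V"
    and sym: "\<forall>u v. E u v \<longrightarrow> E v u" and irr: "\<forall>v. \<not> E v v"
    using sg by (auto simp: simple_graph_def)
  have ne: "V \<noteq> {}" by (rule assms(2))
  define X where "X = chromatic_symfun V E"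
  define n where "n = card V"
  have n1: "n \<ge> 1" using fV ne by (simp add: n_def card_gt_0_iff Suc_le_eq)
  have symX: "sym_fun X" unfolding X_def by (rule chrom_sym[OF fV])
  have ncX: "\<not> series_const X" unfolding X_def by (rule chrom_nonconst[of V E, OF fV ne irr])
  have X0: "X (\<lambda>_. 0) = 0" unfolding X_def by (rule chrom_zero[OF fV ne])
  have homX: "\<And>m. X m \<noteq> 0 \<Longrightarrow> mdeg m = n" using chrom_bnd[OF fV] by (simp add: X_def n_def)
  show ?thesis
  proof
    assume "tree V E"
    hence cg: "connected_graph V E" by (simp add: tree_def)
    have EWV: "EW E V = E" using inV by (auto simp: EW_def fun_eq_iff)
    have cW: "connW E V" using cg by (simp add: connW_def EWV connected_graph_def)
    have nounit: "\<not> (\<exists>g. sym_fun g \<and> series_mult X g = series_one)"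
    proof
      assume "\<exists>g. sym_fun g \<and> series_mult X g = series_one"
      then obtain g where "series_mult X g = series_one" by blast
      hence "series_mult X g (\<lambda>_. 0) = 1" by (simp add: series_one_def)
      thus False using X0 by (simp add: series_mult_zero)
    qed
    have nofac: "\<not> (\<exists>g h. sym_fun g \<and> sym_fun h \<and> \<not> series_const g \<and> \<not> series_const h \<and> X = series_mult g h)"
    proof
      assume "\<exists>g h. sym_fun g \<and> sym_fun h \<and> \<not> series_const g \<and> \<not> series_const h \<and> X = series_mult g h"
      then obtain g h where sg': "sym_fun g" and sh: "sym_fun h" and ng: "\<not> series_const g"
        and nh: "\<not> series_const h" and Xgh: "X = series_mult g h" by blast
      obtain Dg0 where bg0: "bnd g Dg0" using sym_bnd[OF sg'] by blast
      obtain Dh0 where bh0: "bnd h Dh0" using sym_bnd[OF sh] by blast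
      have hom: "\<And>m. series_mult g h m \<noteq> 0 \<Longrightarrow> mdeg m = n" using homX Xgh by simp
      have z: "g (\<lambda>_. 0) = 0 \<and> h (\<lambda>_. 0) = 0" by (rule consts_zero[OF bg0 bh0 hom n1 ng nh])
      define Dg where "Dg = Dg0 + n"
      define Dh where "Dh = Dh0"
      define D where "D = Dg + Dh"
      have bg: "bnd g Dg" using bnd_mono[OF bg0] by (simp add: Dg_def)
      have bh: "bnd h Dh" using bh0 by (simp add: Dh_def)
      obtain rg where rg: "\<forall>N. Pspec g N D = of_nat N * poly rg (of_nat N)"
        using sym_spec[OF sg' conjunct1[OF z] bnd_mono[OF bg, of D]] by (auto simp: D_def)
      obtain rh where rh: "\<forall>N. Pspec h N D = of_nat N * poly rh (of_nat N)"
        using sym_spec[OF sh conjunct2[OF z] bnd_mono[OF bh, of D]] by (auto simp: D_def)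
      have mul: "\<And>N. Pspec X N D = Pspec g N D * Pspec h N D"
        unfolding D_def Xgh by (rule mult_spec[OF bg bh])
      have nD: "card V \<le> D" by (simp add: D_def Dg_def n_def)
      have cnt: "\<And>N. Pspec X N D = of_nat (N * (N - 1) ^ (n - 1))"
      proof -
        fix N
        have "Pspec X N D = of_nat (card {\<kappa> \<in> V \<rightarrow>\<^sub>E {..<N}. proper_coloring V E \<kappa>})"
          unfolding X_def by (rule chrom_spec[OF fV nD])
        also have "card {\<kappa> \<in> V \<rightarrow>\<^sub>E {..<N}. proper_coloring V E \<kappa>} = N * (N - 1) ^ (n - 1)"
          unfolding n_def by (rule tree_count[OF fV ne cW ac sym irr])
        finally show "Pspec X N D = of_nat (N * (N - 1) ^ (n - 1))" .
      qed
      have "\<And>N. N \<ge> 1 \<Longrightarrow> of_nat N * poly rg (of_nat N) * (of_nat N * poly rh (of_nat N))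
                 = of_nat N * (of_nat N - 1 :: complex) ^ (n - 1)"
      proof -
        fix N :: nat assume N: "N \<ge> 1"
        have "of_nat N * poly rg (of_nat N) * (of_nat N * poly rh (of_nat N)) = Pspec X N D"
          using mul rg rh by simp
        also have "\<dots> = of_nat (N * (N - 1) ^ (n - 1))" by (rule cnt)
        also have "\<dots> = of_nat N * (of_nat N - 1 :: complex) ^ (n - 1)" using N by (simp add: of_nat_diff)
        finally show "of_nat N * poly rg (of_nat N) * (of_nat N * poly rh (of_nat N))
                 = of_nat N * (of_nat N - 1 :: complex) ^ (n - 1)" .
      qed
      thus False by (rule final_poly)
    qed
    show "irreducible_Lambda (chromatic_symfun V E)"
      using symX ncX nounit nofac by (simp add: irreducible_Lambda_def X_def)
  next
    assume irr_X: "irreducible_Lambda (chromatic_symfun V E)"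
    show "tree V E"
    proof (rule ccontr)
      assume "\<not> tree V E"
      hence "\<not> connected_graph V E" using assms(1) by (simp add: tree_def)
      then obtain u v where u: "u \<in> V" and v: "v \<in> V" and nuv: "\<not> E\<^sup>*\<^sup>* u v"
        by (auto simp: connected_graph_def)
      define V1 where "V1 = {w \<in> V. E\<^sup>*\<^sup>* u w}"
      define V2 where "V2 = V - V1"
      have VU: "V = V1 \<union> V2" and dj: "V1 \<inter> V2 = {}" by (auto simp: V1_def V2_def)
      have noE: "\<And>x y. x \<in> V1 \<Longrightarrow> y \<in> V2 \<Longrightarrow> \<not> E x y \<and> \<not> E y x"
      proof -
        fix x y assume x: "x \<in> V1" and y: "y \<in> V2"
        have ux: "E\<^sup>*\<^sup>* u x" using x by (simp add: V1_def)
        have yn: "\<not> E\<^sup>*\<^sup>* u y" using y by (simp add: V1_def V2_def)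
        have "\<not> E x y"
        proof
          assume exy: "E x y"
          from ux exy have "E\<^sup>*\<^sup>* u y" by (rule rtranclp.rtrancl_into_rtrancl)
          thus False using yn by simp
        qed
        moreover have "\<not> E y x" using \<open>\<not> E x y\<close> sym by blast
        ultimately show "\<not> E x y \<and> \<not> E y x" by blast
      qed
      have fV1: "finite V1" and fV2: "finite V2" using fV by (auto simp: V1_def V2_def)
      have ne1: "V1 \<noteq> {}" using u by (auto simp: V1_def)
      have ne2: "V2 \<noteq> {}" using v nuv by (auto simp: V1_def V2_def)
      have prod: "chromatic_symfun V E = series_mult (chromatic_symfun V1 E) (chromatic_symfun V2 E)"
        by (rule chrom_prod[OF fV VU dj noE])
      have "sym_fun (chromatic_symfun V1 E)" "sym_fun (chromatic_symfun V2 E)"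
        using chrom_sym[OF fV1] chrom_sym[OF fV2] by auto
      moreover have "\<not> series_const (chromatic_symfun V1 E)" "\<not> series_const (chromatic_symfun V2 E)"
        using chrom_nonconst[of V1 E, OF fV1 ne1 irr] chrom_nonconst[of V2 E, OF fV2 ne2 irr] by auto
      ultimately show False using irr_X prod unfolding irreducible_Lambda_def by blast
    qed
  qed
qed


end
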